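(* Let $\mathcal{W}$ be a weakly exact structure on an additive category $\mathcal{A}$ and let \[\begin{array}{ccc} A & \xrightarrow{i} & B\\ {\scriptstyle f}\downarrow & & \downarrow{\scriptstyle f'}\\ A' & \xrightarrow{i'} & B'\end{array}\] be a commutative square in which $i$ and $i'$ are admissible monics of $\mathcal{W}$. Then the following are equivalent: (i) the square is a pushout; (ii) the sequence $A\xrightarrow{\left[\begin{smallmatrix} i\\ -f\end{smallmatrix}\right]} B\oplus A'\xrightarrow{[f'\ \ i']} B'$ is a short exact sequence belonging to $\mathcal{W}$; (iii) the square is both a pushout and a pullback; (iv) there is a commutative diagram whose rows $A\xrightarrow{i}B\xrightarrow{p}C$ and $A'\xrightarrow{i'}B'\xrightarrow{p'}C$ belong to $\mathcal{W}$ and whose vertical maps are $f$, $f'$ and $1_C$. The dual statement (for admissible epics and pullbacks) also holds.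
   Context: Let $\mathcal{A}$ be an additive category. A kernel-cokernel pair (short exact sequence) is a pair of composable morphisms $A\xrightarrow{i}B\xrightarrow{d}C$ with $i$ a kernel of $d$ and $d$ a cokernel of $i$. A weakly exact structure on $\mathcal{A}$ is a class $\mathcal{W}$ of kernel-cokernel pairs, closed under isomorphisms of sequences and under finite direct sums of sequences, such that, calling $i$ an admissible monic (resp. $d$ an admissible epic) if $(i,d)\in\mathcal{W}$ for some $d$ (resp. some $i$): (E0) $1_A$ is an admissible monic for every object $A$; (E0)$^{op}$ $1_A$ is an admissible epic for every object $A$; (E2) for every admissible monic $i:A\to B$ and every morphism $t:A\to C$ the pushout of $i$ along $t$ exists and the resulting morphism $C\to S$ is an admissible monic; (E2)$^{op}$ for every admissible epic $h:A\to C$ and every morphism $t:B\to C$ the pullback of $h$ along $t$ exists and the resulting morphism $P\to B$ is an admissible epic. *)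

theory Defs
  imports Main
begin

text \<open>An additive category, presented by its data: objects, morphisms with
source/target, composition (cmp C g f is g after f), identities, the abelian
group structure on hom-sets, and chosen binary biproducts with injections and
projections.\<close>

record ('o, 'm) addcat =
  Ob   :: "'o set"
  Mor  :: "'m set"
  src  :: "'m \<Rightarrow> 'o"
  tgt  :: "'m \<Rightarrow> 'o"
  cmp  :: "'m \<Rightarrow> 'm \<Rightarrow> 'm"
  idm  :: "'o \<Rightarrow> 'm"
  madd :: "'m \<Rightarrow> 'm \<Rightarrow> 'm"
  mneg :: "'m \<Rightarrow> 'm"
  zer  :: "'o \<Rightarrow> 'o \<Rightarrow> 'm"
  bsum :: "'o \<Rightarrow> 'o \<Rightarrow> 'o"
  bin1 :: "'o \<Rightarrow> 'o \<Rightarrow> 'm"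
  bin2 :: "'o \<Rightarrow> 'o \<Rightarrow> 'm"
  bpr1 :: "'o \<Rightarrow> 'o \<Rightarrow> 'm"
  bpr2 :: "'o \<Rightarrow> 'o \<Rightarrow> 'm"

definition Hom :: "('o, 'm, 'x) addcat_scheme \<Rightarrow> 'o \<Rightarrow> 'o \<Rightarrow> 'm set" where
  "Hom C A B = {f \<in> Mor C. src C f = A \<and> tgt C f = B}"

definition additive_category :: "('o, 'm, 'x) addcat_scheme \<Rightarrow> bool" where
  "additive_category C \<longleftrightarrow>
     (\<forall>f\<in>Mor C. src C f \<in> Ob C \<and> tgt C f \<in> Ob C) \<and>
     (\<forall>A\<in>Ob C. idm C A \<in> Hom C A A) \<and>
     (\<forall>A B D f g. f \<in> Hom C A B \<longrightarrow> g \<in> Hom C B D \<longrightarrow> cmp C g f \<in> Hom C A D) \<and>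
     (\<forall>A B D E f g h. f \<in> Hom C A B \<longrightarrow> g \<in> Hom C B D \<longrightarrow> h \<in> Hom C D E \<longrightarrow>
         cmp C h (cmp C g f) = cmp C (cmp C h g) f) \<and>
     (\<forall>A B f. f \<in> Hom C A B \<longrightarrow> cmp C (idm C B) f = f \<and> cmp C f (idm C A) = f) \<and>
     \<comment> \<open>each hom-set is an abelian group\<close>
     (\<forall>A\<in>Ob C. \<forall>B\<in>Ob C. zer C A B \<in> Hom C A B) \<and>
     (\<forall>A B f g. f \<in> Hom C A B \<longrightarrow> g \<in> Hom C A B \<longrightarrow>
         madd C f g \<in> Hom C A B \<and> madd C f g = madd C g f) \<and>
     (\<forall>A B f g h. f \<in> Hom C A B \<longrightarrow> g \<in> Hom C A B \<longrightarrow> h \<in> Hom C A B \<longrightarrow>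
         madd C (madd C f g) h = madd C f (madd C g h)) \<and>
     (\<forall>A B f. f \<in> Hom C A B \<longrightarrow>
         mneg C f \<in> Hom C A B \<and> madd C f (zer C A B) = f \<and> madd C f (mneg C f) = zer C A B) \<and>
     \<comment> \<open>composition is bilinear\<close>
     (\<forall>A B D f g h. f \<in> Hom C A B \<longrightarrow> g \<in> Hom C A B \<longrightarrow> h \<in> Hom C B D \<longrightarrow>
         cmp C h (madd C f g) = madd C (cmp C h f) (cmp C h g)) \<and>
     (\<forall>E A B f g k. f \<in> Hom C A B \<longrightarrow> g \<in> Hom C A B \<longrightarrow> k \<in> Hom C E A \<longrightarrow>
         cmp C (madd C f g) k = madd C (cmp C f k) (cmp C g k)) \<and>
     \<comment> \<open>a zero object\<close>
     (\<exists>Z\<in>Ob C. \<forall>A\<in>Ob C. (\<exists>!f. f \<in> Hom C Z A) \<and> (\<exists>!f. f \<in> Hom C A Z)) \<and>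
     \<comment> \<open>binary biproducts\<close>
     (\<forall>A\<in>Ob C. \<forall>B\<in>Ob C. bsum C A B \<in> Ob C \<and>
         bin1 C A B \<in> Hom C A (bsum C A B) \<and> bin2 C A B \<in> Hom C B (bsum C A B) \<and>
         bpr1 C A B \<in> Hom C (bsum C A B) A \<and> bpr2 C A B \<in> Hom C (bsum C A B) B \<and>
         cmp C (bpr1 C A B) (bin1 C A B) = idm C A \<and>
         cmp C (bpr2 C A B) (bin2 C A B) = idm C B \<and>
         cmp C (bpr1 C A B) (bin2 C A B) = zer C B A \<and>
         cmp C (bpr2 C A B) (bin1 C A B) = zer C A B \<and>
         madd C (cmp C (bin1 C A B) (bpr1 C A B)) (cmp C (bin2 C A B) (bpr2 C A B))
           = idm C (bsum C A B))"

definition iso :: "('o, 'm, 'x) addcat_scheme \<Rightarrow> 'm \<Rightarrow> bool" where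
  "iso C f \<longleftrightarrow> f \<in> Mor C \<and> (\<exists>g \<in> Hom C (tgt C f) (src C f).
      cmp C g f = idm C (src C f) \<and> cmp C f g = idm C (tgt C f))"

definition is_kernel :: "('o, 'm, 'x) addcat_scheme \<Rightarrow> 'm \<Rightarrow> 'm \<Rightarrow> bool" where
  "is_kernel C i d \<longleftrightarrow> i \<in> Mor C \<and> d \<in> Mor C \<and> tgt C i = src C d \<and>
     cmp C d i = zer C (src C i) (tgt C d) \<and>
     (\<forall>X\<in>Ob C. \<forall>g \<in> Hom C X (src C d). cmp C d g = zer C X (tgt C d) \<longrightarrow>
        (\<exists>!h. h \<in> Hom C X (src C i) \<and> cmp C i h = g))"

definition is_cokernel :: "('o, 'm, 'x) addcat_scheme \<Rightarrow> 'm \<Rightarrow> 'm \<Rightarrow> bool" where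
  "is_cokernel C d i \<longleftrightarrow> i \<in> Mor C \<and> d \<in> Mor C \<and> tgt C i = src C d \<and>
     cmp C d i = zer C (src C i) (tgt C d) \<and>
     (\<forall>X\<in>Ob C. \<forall>g \<in> Hom C (tgt C i) X. cmp C g i = zer C (src C i) X \<longrightarrow>
        (\<exists>!h. h \<in> Hom C (tgt C d) X \<and> cmp C h d = g))"

definition kc_pair :: "('o, 'm, 'x) addcat_scheme \<Rightarrow> 'm \<Rightarrow> 'm \<Rightarrow> bool" where
  "kc_pair C i d \<longleftrightarrow> is_kernel C i d \<and> is_cokernel C d i"

definition msum :: "('o, 'm, 'x) addcat_scheme \<Rightarrow> 'm \<Rightarrow> 'm \<Rightarrow> 'm" where
  "msum C f g = madd C
     (cmp C (bin1 C (tgt C f) (tgt C g)) (cmp C f (bpr1 C (src C f) (src C g))))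
     (cmp C (bin2 C (tgt C f) (tgt C g)) (cmp C g (bpr2 C (src C f) (src C g))))"

text \<open>Pushout square: t' \<circ> i = j \<circ> t, with i : A \<rightarrow> B, t : A \<rightarrow> D, t' : B \<rightarrow> S, j : D \<rightarrow> S.\<close>
definition is_pushout :: "('o, 'm, 'x) addcat_scheme \<Rightarrow> 'm \<Rightarrow> 'm \<Rightarrow> 'm \<Rightarrow> 'm \<Rightarrow> bool" where
  "is_pushout C i t t' j \<longleftrightarrow> i \<in> Mor C \<and> t \<in> Mor C \<and> t' \<in> Mor C \<and> j \<in> Mor C \<and>
     src C t = src C i \<and> src C t' = tgt C i \<and> src C j = tgt C t \<and> tgt C j = tgt C t' \<and>
     cmp C t' i = cmp C j t \<and>
     (\<forall>X\<in>Ob C. \<forall>u \<in> Hom C (tgt C i) X. \<forall>v \<in> Hom C (tgt C t) X.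
        cmp C u i = cmp C v t \<longrightarrow>
        (\<exists>!w. w \<in> Hom C (tgt C t') X \<and> cmp C w t' = u \<and> cmp C w j = v))"

text \<open>Pullback square: h \<circ> q = t \<circ> p, with h : A \<rightarrow> E, t : B \<rightarrow> E, q : P \<rightarrow> A, p : P \<rightarrow> B.\<close>
definition is_pullback :: "('o, 'm, 'x) addcat_scheme \<Rightarrow> 'm \<Rightarrow> 'm \<Rightarrow> 'm \<Rightarrow> 'm \<Rightarrow> bool" where
  "is_pullback C h t q p \<longleftrightarrow> h \<in> Mor C \<and> t \<in> Mor C \<and> q \<in> Mor C \<and> p \<in> Mor C \<and>
     tgt C t = tgt C h \<and> tgt C q = src C h \<and> tgt C p = src C t \<and> src C p = src C q \<and>
     cmp C h q = cmp C t p \<and>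
     (\<forall>X\<in>Ob C. \<forall>u \<in> Hom C X (src C h). \<forall>v \<in> Hom C X (src C t).
        cmp C h u = cmp C t v \<longrightarrow>
        (\<exists>!w. w \<in> Hom C X (src C q) \<and> cmp C q w = u \<and> cmp C p w = v))"

definition adm_monic :: "('o, 'm, 'x) addcat_scheme \<Rightarrow> ('m \<times> 'm) set \<Rightarrow> 'm \<Rightarrow> bool" where
  "adm_monic C W i \<longleftrightarrow> (\<exists>d. (i, d) \<in> W)"

definition adm_epic :: "('o, 'm, 'x) addcat_scheme \<Rightarrow> ('m \<times> 'm) set \<Rightarrow> 'm \<Rightarrow> bool" where
  "adm_epic C W d \<longleftrightarrow> (\<exists>i. (i, d) \<in> W)"

definition weakly_exact :: "('o, 'm, 'x) addcat_scheme \<Rightarrow> ('m \<times> 'm) set \<Rightarrow> bool" where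
  "weakly_exact C W \<longleftrightarrow>
     (\<forall>(i, d) \<in> W. kc_pair C i d) \<and>
     \<comment> \<open>closed under isomorphisms of sequences\<close>
     (\<forall>(i, d) \<in> W. \<forall>i' d' a b c. kc_pair C i' d' \<and> iso C a \<and> iso C b \<and> iso C c \<and>
        a \<in> Hom C (src C i) (src C i') \<and> b \<in> Hom C (tgt C i) (tgt C i') \<and>
        c \<in> Hom C (tgt C d) (tgt C d') \<and>
        cmp C b i = cmp C i' a \<and> cmp C c d = cmp C d' b \<longrightarrow> (i', d') \<in> W) \<and>
     \<comment> \<open>closed under (binary) direct sums\<close>
     (\<forall>(i1, d1) \<in> W. \<forall>(i2, d2) \<in> W. (msum C i1 i2, msum C d1 d2) \<in> W) \<and>
     \<comment> \<open>(E0) and (E0)op\<close>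
     (\<forall>A\<in>Ob C. adm_monic C W (idm C A)) \<and>
     (\<forall>A\<in>Ob C. adm_epic C W (idm C A)) \<and>
     \<comment> \<open>(E2): pushouts of admissible monics exist and are admissible monics\<close>
     (\<forall>i t. adm_monic C W i \<and> t \<in> Mor C \<and> src C t = src C i \<longrightarrow>
        (\<exists>t' j. is_pushout C i t t' j) \<and>
        (\<forall>t' j. is_pushout C i t t' j \<longrightarrow> adm_monic C W j)) \<and>
     \<comment> \<open>(E2)op: pullbacks of admissible epics exist and are admissible epics\<close>
     (\<forall>h t. adm_epic C W h \<and> t \<in> Mor C \<and> tgt C t = tgt C h \<longrightarrow>
        (\<exists>q p. is_pullback C h t q p) \<and>
        (\<forall>q p. is_pullback C h t q p \<longrightarrow> adm_epic C W p))"

end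

theory Submission
  imports Defs
begin



locale ac =
  fixes C :: "('o, 'm, 'x) addcat_scheme"
  assumes AC: "additive_category C"
begin

abbreviation cp (infixl "\<cdot>" 70) where "g \<cdot> f \<equiv> cmp C g f"
abbreviation ad (infixl "\<oplus>" 65) where "f \<oplus> g \<equiv> madd C f g"
abbreviation ng where "ng f \<equiv> mneg C f"
abbreviation Z where "Z A B \<equiv> zer C A B"

lemma HomI: "f \<in> Mor C \<Longrightarrow> src C f = A \<Longrightarrow> tgt C f = B \<Longrightarrow> f \<in> Hom C A B"
  by (simp add: Hom_def)
lemma hom_mor: "f \<in> Hom C A B \<Longrightarrow> f \<in> Mor C" by (simp add: Hom_def)
lemma hom_src: "f \<in> Hom C A B \<Longrightarrow> src C f = A" by (simp add: Hom_def)
lemma hom_tgt: "f \<in> Hom C A B \<Longrightarrow> tgt C f = B" by (simp add: Hom_def)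
lemma mor_hom: "f \<in> Mor C \<Longrightarrow> f \<in> Hom C (src C f) (tgt C f)" by (simp add: Hom_def)
lemmas ACD = AC[unfolded additive_category_def]
lemmas ax1 = ACD[THEN conjunct1]
lemmas ax2 = ACD[THEN conjunct2, THEN conjunct1]
lemmas ax3 = ACD[THEN conjunct2, THEN conjunct2, THEN conjunct1]
lemmas ax4 = ACD[THEN conjunct2, THEN conjunct2, THEN conjunct2, THEN conjunct1]
lemmas ax5 = ACD[THEN conjunct2, THEN conjunct2, THEN conjunct2, THEN conjunct2, THEN conjunct1]
lemmas ax6 = ACD[THEN conjunct2, THEN conjunct2, THEN conjunct2, THEN conjunct2, THEN conjunct2, THEN conjunct1]
lemmas ax7 = ACD[THEN conjunct2, THEN conjunct2, THEN conjunct2, THEN conjunct2, THEN conjunct2, THEN conjunct2, THEN conjunct1]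
lemmas ax8 = ACD[THEN conjunct2, THEN conjunct2, THEN conjunct2, THEN conjunct2, THEN conjunct2, THEN conjunct2, THEN conjunct2, THEN conjunct1]
lemmas ax9 = ACD[THEN conjunct2, THEN conjunct2, THEN conjunct2, THEN conjunct2, THEN conjunct2, THEN conjunct2, THEN conjunct2, THEN conjunct2, THEN conjunct1]
lemmas ax10 = ACD[THEN conjunct2, THEN conjunct2, THEN conjunct2, THEN conjunct2, THEN conjunct2, THEN conjunct2, THEN conjunct2, THEN conjunct2, THEN conjunct2, THEN conjunct1]
lemmas ax11 = ACD[THEN conjunct2, THEN conjunct2, THEN conjunct2, THEN conjunct2, THEN conjunct2, THEN conjunct2, THEN conjunct2, THEN conjunct2, THEN conjunct2, THEN conjunct2, THEN conjunct1]
lemmas ax12 = ACD[THEN conjunct2, THEN conjunct2, THEN conjunct2, THEN conjunct2, THEN conjunct2, THEN conjunct2, THEN conjunct2, THEN conjunct2, THEN conjunct2, THEN conjunct2, THEN conjunct2, THEN conjunct1]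
lemmas ax13 = ACD[THEN conjunct2, THEN conjunct2, THEN conjunct2, THEN conjunct2, THEN conjunct2, THEN conjunct2, THEN conjunct2, THEN conjunct2, THEN conjunct2, THEN conjunct2, THEN conjunct2, THEN conjunct2]

lemma mor_ob: "f \<in> Mor C \<Longrightarrow> src C f \<in> Ob C \<and> tgt C f \<in> Ob C"
  using ax1 by blast
lemma hom_ob1: "f \<in> Hom C A B \<Longrightarrow> A \<in> Ob C"
  using mor_ob hom_mor hom_src by metis
lemma hom_ob2: "f \<in> Hom C A B \<Longrightarrow> B \<in> Ob C"
  using mor_ob hom_mor hom_tgt by metis

lemma id_hom: "A \<in> Ob C \<Longrightarrow> idm C A \<in> Hom C A A"
  using ax2 by blast
lemma comp_hom: "f \<in> Hom C A B \<Longrightarrow> g \<in> Hom C B D \<Longrightarrow> g \<cdot> f \<in> Hom C A D"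
  using ax3 by blast
lemma assoc: "f \<in> Hom C A B \<Longrightarrow> g \<in> Hom C B D \<Longrightarrow> h \<in> Hom C D E \<Longrightarrow> h \<cdot> (g \<cdot> f) = (h \<cdot> g) \<cdot> f"
  using ax4 by blast
lemma id_l: "f \<in> Hom C A B \<Longrightarrow> idm C B \<cdot> f = f"
  using ax5 by blast
lemma id_r: "f \<in> Hom C A B \<Longrightarrow> f \<cdot> idm C A = f"
  using ax5 by blast
lemma zer_hom: "A \<in> Ob C \<Longrightarrow> B \<in> Ob C \<Longrightarrow> Z A B \<in> Hom C A B"
  using ax6 by blast
lemma add_hom: "f \<in> Hom C A B \<Longrightarrow> g \<in> Hom C A B \<Longrightarrow> f \<oplus> g \<in> Hom C A B"
  using ax7 by blast
lemma add_comm: "f \<in> Hom C A B \<Longrightarrow> g \<in> Hom C A B \<Longrightarrow> f \<oplus> g = g \<oplus> f"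
  using ax7 by blast
lemma add_assoc: "f \<in> Hom C A B \<Longrightarrow> g \<in> Hom C A B \<Longrightarrow> h \<in> Hom C A B \<Longrightarrow> (f \<oplus> g) \<oplus> h = f \<oplus> (g \<oplus> h)"
  using ax8 by blast
lemma neg_hom: "f \<in> Hom C A B \<Longrightarrow> ng f \<in> Hom C A B"
  using ax9 by blast
lemma add_0: "f \<in> Hom C A B \<Longrightarrow> f \<oplus> Z A B = f"
  using ax9 by blast
lemma add_neg: "f \<in> Hom C A B \<Longrightarrow> f \<oplus> ng f = Z A B"
  using ax9 by blast
lemma distl: "f \<in> Hom C A B \<Longrightarrow> g \<in> Hom C A B \<Longrightarrow> h \<in> Hom C B D \<Longrightarrow> h \<cdot> (f \<oplus> g) = h \<cdot> f \<oplus> h \<cdot> g"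
  using ax10 by blast
lemma distr: "f \<in> Hom C A B \<Longrightarrow> g \<in> Hom C A B \<Longrightarrow> k \<in> Hom C E A \<Longrightarrow> (f \<oplus> g) \<cdot> k = f \<cdot> k \<oplus> g \<cdot> k"
  using ax11 by blast

lemma bip: "A \<in> Ob C \<Longrightarrow> B \<in> Ob C \<Longrightarrow> bsum C A B \<in> Ob C \<and>
         bin1 C A B \<in> Hom C A (bsum C A B) \<and> bin2 C A B \<in> Hom C B (bsum C A B) \<and>
         bpr1 C A B \<in> Hom C (bsum C A B) A \<and> bpr2 C A B \<in> Hom C (bsum C A B) B \<and>
         bpr1 C A B \<cdot> bin1 C A B = idm C A \<and>
         bpr2 C A B \<cdot> bin2 C A B = idm C B \<and>
         bpr1 C A B \<cdot> bin2 C A B = Z B A \<and>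
         bpr2 C A B \<cdot> bin1 C A B = Z A B \<and>
         (bin1 C A B \<cdot> bpr1 C A B) \<oplus> (bin2 C A B \<cdot> bpr2 C A B) = idm C (bsum C A B)"
  using ax13 by blast

lemmas homs = comp_hom add_hom neg_hom id_hom zer_hom

lemma add_0_l: "f \<in> Hom C A B \<Longrightarrow> Z A B \<oplus> f = f"
  by (metis add_0 add_comm hom_ob1 hom_ob2 zer_hom)
lemma add_neg_l: "f \<in> Hom C A B \<Longrightarrow> ng f \<oplus> f = Z A B"
  by (metis add_neg add_comm neg_hom)

lemma idem_zero: assumes "x \<in> Hom C A B" "x \<oplus> x = x" shows "x = Z A B"
proof -
  have "x = x \<oplus> (x \<oplus> ng x)" using assms add_neg add_0 by metis
  also have "\<dots> = (x \<oplus> x) \<oplus> ng x" using assms by (metis add_assoc neg_hom)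
  also have "\<dots> = Z A B" using assms add_neg by metis
  finally show ?thesis .
qed

lemma comp_zer_r: assumes "h \<in> Hom C B D" "A \<in> Ob C" shows "h \<cdot> Z A B = Z A D"
proof -
  have z: "Z A B \<in> Hom C A B" using assms hom_ob1 zer_hom by blast
  have "h \<cdot> Z A B \<oplus> h \<cdot> Z A B = h \<cdot> (Z A B \<oplus> Z A B)" using distl z assms by metis
  also have "\<dots> = h \<cdot> Z A B" using add_0 z by metis
  finally show ?thesis using idem_zero comp_hom z assms by metis
qed

lemma comp_zer_l: assumes "h \<in> Hom C A B" "D \<in> Ob C" shows "Z B D \<cdot> h = Z A D"
proof -
  have z: "Z B D \<in> Hom C B D" using assms hom_ob2 zer_hom by blast
  have "Z B D \<cdot> h \<oplus> Z B D \<cdot> h = (Z B D \<oplus> Z B D) \<cdot> h" using distr z assms by metis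
  also have "\<dots> = Z B D \<cdot> h" using add_0 z by metis
  finally show ?thesis using idem_zero comp_hom z assms by metis
qed

lemma neg_unique: assumes "a \<in> Hom C A B" "b \<in> Hom C A B" "a \<oplus> b = Z A B" shows "b = ng a"
proof -
  have "b = b \<oplus> (a \<oplus> ng a)" using assms add_neg add_0 by metis
  also have "\<dots> = (b \<oplus> a) \<oplus> ng a" using assms by (metis add_assoc neg_hom)
  also have "\<dots> = ng a" using assms add_comm add_0_l neg_hom by metis
  finally show ?thesis .
qed

lemma eq_of_diff: assumes "a \<in> Hom C A B" "b \<in> Hom C A B" "a \<oplus> ng b = Z A B" shows "a = b"
proof -
  have "a = a \<oplus> (ng b \<oplus> b)" using assms add_neg_l add_0 by metis
  also have "\<dots> = (a \<oplus> ng b) \<oplus> b" using assms by (metis add_assoc neg_hom)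
  also have "\<dots> = b" using assms add_0_l by metis
  finally show ?thesis .
qed

lemma comp_neg_r: assumes "f \<in> Hom C A B" "h \<in> Hom C B D" shows "h \<cdot> ng f = ng (h \<cdot> f)"
proof -
  have "h \<cdot> f \<oplus> h \<cdot> ng f = h \<cdot> (f \<oplus> ng f)" using assms distl neg_hom by metis
  also have "\<dots> = Z A D" using assms add_neg comp_zer_r hom_ob1 by metis
  finally show ?thesis using neg_unique assms comp_hom neg_hom by metis
qed

lemma comp_neg_l: assumes "f \<in> Hom C A B" "k \<in> Hom C E A" shows "ng f \<cdot> k = ng (f \<cdot> k)"
proof -
  have "f \<cdot> k \<oplus> ng f \<cdot> k = (f \<oplus> ng f) \<cdot> k" using assms distr neg_hom by metis
  also have "\<dots> = Z E B" using assms add_neg comp_zer_l hom_ob2 by metis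
  finally show ?thesis using neg_unique assms comp_hom neg_hom by metis
qed

lemma neg_neg: "a \<in> Hom C A B \<Longrightarrow> ng (ng a) = a"
  by (metis neg_unique add_neg_l neg_hom)

end

context ac begin
lemma bsum_ob: "A \<in> Ob C \<Longrightarrow> B \<in> Ob C \<Longrightarrow> bsum C A B \<in> Ob C" using bip by blast
lemma bin1_hom: "A \<in> Ob C \<Longrightarrow> B \<in> Ob C \<Longrightarrow> bin1 C A B \<in> Hom C A (bsum C A B)" using bip by blast
lemma bin2_hom: "A \<in> Ob C \<Longrightarrow> B \<in> Ob C \<Longrightarrow> bin2 C A B \<in> Hom C B (bsum C A B)" using bip by blast
lemma bpr1_hom: "A \<in> Ob C \<Longrightarrow> B \<in> Ob C \<Longrightarrow> bpr1 C A B \<in> Hom C (bsum C A B) A" using bip by blast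
lemma bpr2_hom: "A \<in> Ob C \<Longrightarrow> B \<in> Ob C \<Longrightarrow> bpr2 C A B \<in> Hom C (bsum C A B) B" using bip by blast
lemma p1i1: "A \<in> Ob C \<Longrightarrow> B \<in> Ob C \<Longrightarrow> bpr1 C A B \<cdot> bin1 C A B = idm C A" using bip by blast
lemma p2i2: "A \<in> Ob C \<Longrightarrow> B \<in> Ob C \<Longrightarrow> bpr2 C A B \<cdot> bin2 C A B = idm C B" using bip by blast
lemma p1i2: "A \<in> Ob C \<Longrightarrow> B \<in> Ob C \<Longrightarrow> bpr1 C A B \<cdot> bin2 C A B = Z B A" using bip by blast
lemma p2i1: "A \<in> Ob C \<Longrightarrow> B \<in> Ob C \<Longrightarrow> bpr2 C A B \<cdot> bin1 C A B = Z A B" using bip by blast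
lemma bip_id: "A \<in> Ob C \<Longrightarrow> B \<in> Ob C \<Longrightarrow> (bin1 C A B \<cdot> bpr1 C A B) \<oplus> (bin2 C A B \<cdot> bpr2 C A B) = idm C (bsum C A B)" using bip by blast
end



lemma ex1_uniq: "\<exists>!x. P x \<Longrightarrow> P a \<Longrightarrow> P b \<Longrightarrow> a = b" by blast

lemma is_kernelD: "is_kernel C k d \<Longrightarrow> X \<in> Ob C \<Longrightarrow> g \<in> Hom C X (src C d) \<Longrightarrow>
   cmp C d g = zer C X (tgt C d) \<Longrightarrow> \<exists>!h. h \<in> Hom C X (src C k) \<and> cmp C k h = g"
  unfolding is_kernel_def by (elim conjE) (drule bspec, assumption, drule bspec, assumption, erule mp)

lemma is_cokernelD: "is_cokernel C d k \<Longrightarrow> X \<in> Ob C \<Longrightarrow> g \<in> Hom C (tgt C k) X \<Longrightarrow>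
   cmp C g k = zer C (src C k) X \<Longrightarrow> \<exists>!h. h \<in> Hom C (tgt C d) X \<and> cmp C h d = g"
  unfolding is_cokernel_def by (elim conjE) (drule bspec, assumption, drule bspec, assumption, erule mp)

context ac begin

lemma ker_basic: assumes "is_kernel C k d"
  shows "k \<in> Hom C (src C k) (src C d)" "d \<in> Hom C (src C d) (tgt C d)"
        "d \<cdot> k = Z (src C k) (tgt C d)"
  using assms unfolding is_kernel_def Hom_def by simp_all

lemma ker_fac: assumes "is_kernel C k d" "g \<in> Hom C X (src C d)" "d \<cdot> g = Z X (tgt C d)"
  obtains h where "h \<in> Hom C (X) (src C k)" "k \<cdot> h = g"
proof -
  have "X \<in> Ob C" using assms(2) by (rule hom_ob1)
  from ex1_implies_ex[OF is_kernelD[OF assms(1) this assms(2,3)]] that show ?thesis by blast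
qed

lemma ker_mono: assumes "is_kernel C k d" "x \<in> Hom C X (src C k)" "y \<in> Hom C X (src C k)"
  "k \<cdot> x = k \<cdot> y" shows "x = y"
proof -
  note kb = ker_basic[OF assms(1)]
  have X: "X \<in> Ob C" using assms(2) by (rule hom_ob1)
  have g: "k \<cdot> x \<in> Hom C X (src C d)" using comp_hom kb(1) assms(2) by blast
  have "d \<cdot> (k \<cdot> x) = (d \<cdot> k) \<cdot> x" using assoc[OF assms(2) kb(1,2)] .
  also have "\<dots> = Z X (tgt C d)" using kb(3) comp_zer_l[OF assms(2) hom_ob2[OF kb(2)]] by simp
  finally have dz: "d \<cdot> (k \<cdot> x) = Z X (tgt C d)" .
  show ?thesis by (rule ex1_uniq[OF is_kernelD[OF assms(1) X g dz]]) (use assms in auto)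
qed

lemma cok_basic: assumes "is_cokernel C d k"
  shows "k \<in> Hom C (src C k) (src C d)" "d \<in> Hom C (src C d) (tgt C d)"
        "d \<cdot> k = Z (src C k) (tgt C d)" "tgt C k = src C d"
  using assms unfolding is_cokernel_def Hom_def by simp_all

lemma cok_fac: assumes "is_cokernel C d k" "g \<in> Hom C (src C d) X" "g \<cdot> k = Z (src C k) X"
  obtains h where "h \<in> Hom C (tgt C d) X" "h \<cdot> d = g"
proof -
  have "X \<in> Ob C" using assms(2) by (rule hom_ob2)
  moreover have "g \<in> Hom C (tgt C k) X" using assms(2) cok_basic(4)[OF assms(1)] by simp
  ultimately have "\<exists>h. h \<in> Hom C (tgt C d) X \<and> h \<cdot> d = g" using ex1_implies_ex[OF is_cokernelD[OF assms(1) _ _ assms(3)]] by blast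
  with that show ?thesis by blast
qed

lemma cok_epi: assumes "is_cokernel C d k" "x \<in> Hom C (tgt C d) X" "y \<in> Hom C (tgt C d) X"
  "x \<cdot> d = y \<cdot> d" shows "x = y"
proof -
  note kb = cok_basic[OF assms(1)]
  have X: "X \<in> Ob C" using assms(2) by (rule hom_ob2)
  have g: "x \<cdot> d \<in> Hom C (tgt C k) X" using comp_hom[OF kb(2) assms(2)] kb(4) by simp
  have "(x \<cdot> d) \<cdot> k = x \<cdot> (d \<cdot> k)" using assoc[OF kb(1,2) assms(2)] by simp
  also have "\<dots> = Z (src C k) X" using kb(3) comp_zer_r[OF assms(2) hom_ob1[OF kb(1)]] by simp
  finally have dz: "(x \<cdot> d) \<cdot> k = Z (src C k) X" .
  show ?thesis by (rule ex1_uniq[OF is_cokernelD[OF assms(1) X g dz]]) (use assms in auto)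
qed

text \<open>Biproduct calculus\<close>

lemma copair_hom: assumes "u \<in> Hom C B1 X" "v \<in> Hom C B2 X"
  shows "u \<cdot> bpr1 C B1 B2 \<oplus> v \<cdot> bpr2 C B1 B2 \<in> Hom C (bsum C B1 B2) X"
proof -
  have o: "B1 \<in> Ob C" "B2 \<in> Ob C" using assms hom_ob1 by blast+
  show ?thesis by (rule add_hom[OF comp_hom[OF bpr1_hom[OF o] assms(1)] comp_hom[OF bpr2_hom[OF o] assms(2)]])
qed

lemma copair_in1: assumes "u \<in> Hom C B1 X" "v \<in> Hom C B2 X"
  shows "(u \<cdot> bpr1 C B1 B2 \<oplus> v \<cdot> bpr2 C B1 B2) \<cdot> bin1 C B1 B2 = u"
proof -
  have o: "B1 \<in> Ob C" "B2 \<in> Ob C" using assms hom_ob1 by blast+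
  have "(u \<cdot> bpr1 C B1 B2 \<oplus> v \<cdot> bpr2 C B1 B2) \<cdot> bin1 C B1 B2
      = (u \<cdot> bpr1 C B1 B2) \<cdot> bin1 C B1 B2 \<oplus> (v \<cdot> bpr2 C B1 B2) \<cdot> bin1 C B1 B2"
    by (rule distr[OF comp_hom[OF bpr1_hom[OF o] assms(1)] comp_hom[OF bpr2_hom[OF o] assms(2)] bin1_hom[OF o]])
  also have "\<dots> = u \<cdot> (bpr1 C B1 B2 \<cdot> bin1 C B1 B2) \<oplus> v \<cdot> (bpr2 C B1 B2 \<cdot> bin1 C B1 B2)"
    using assoc[OF bin1_hom[OF o] bpr1_hom[OF o] assms(1)] assoc[OF bin1_hom[OF o] bpr2_hom[OF o] assms(2)] by simp
  also have "\<dots> = u \<oplus> Z B1 X" using p1i1[OF o] p2i1[OF o] id_r[OF assms(1)] comp_zer_r[OF assms(2) o(1)] by simp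
  also have "\<dots> = u" using add_0 assms by metis
  finally show ?thesis .
qed

lemma copair_in2: assumes "u \<in> Hom C B1 X" "v \<in> Hom C B2 X"
  shows "(u \<cdot> bpr1 C B1 B2 \<oplus> v \<cdot> bpr2 C B1 B2) \<cdot> bin2 C B1 B2 = v"
proof -
  have o: "B1 \<in> Ob C" "B2 \<in> Ob C" using assms hom_ob1 by blast+
  have "(u \<cdot> bpr1 C B1 B2 \<oplus> v \<cdot> bpr2 C B1 B2) \<cdot> bin2 C B1 B2
      = (u \<cdot> bpr1 C B1 B2) \<cdot> bin2 C B1 B2 \<oplus> (v \<cdot> bpr2 C B1 B2) \<cdot> bin2 C B1 B2"
    by (rule distr[OF comp_hom[OF bpr1_hom[OF o] assms(1)] comp_hom[OF bpr2_hom[OF o] assms(2)] bin2_hom[OF o]])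
  also have "\<dots> = u \<cdot> (bpr1 C B1 B2 \<cdot> bin2 C B1 B2) \<oplus> v \<cdot> (bpr2 C B1 B2 \<cdot> bin2 C B1 B2)"
    using assoc[OF bin2_hom[OF o] bpr1_hom[OF o] assms(1)] assoc[OF bin2_hom[OF o] bpr2_hom[OF o] assms(2)] by simp
  also have "\<dots> = Z B2 X \<oplus> v" using p1i2[OF o] p2i2[OF o] id_r[OF assms(2)] comp_zer_r[OF assms(1) o(2)] by simp
  also have "\<dots> = v" using add_0_l assms by metis
  finally show ?thesis .
qed

lemma tuple_hom: assumes "x \<in> Hom C X B1" "y \<in> Hom C X B2"
  shows "bin1 C B1 B2 \<cdot> x \<oplus> bin2 C B1 B2 \<cdot> y \<in> Hom C X (bsum C B1 B2)"
proof -
  have o: "B1 \<in> Ob C" "B2 \<in> Ob C" using assms hom_ob2 by blast+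
  show ?thesis by (rule add_hom[OF comp_hom[OF assms(1) bin1_hom[OF o]] comp_hom[OF assms(2) bin2_hom[OF o]]])
qed

lemma tuple_pr1: assumes "x \<in> Hom C X B1" "y \<in> Hom C X B2"
  shows "bpr1 C B1 B2 \<cdot> (bin1 C B1 B2 \<cdot> x \<oplus> bin2 C B1 B2 \<cdot> y) = x"
proof -
  have o: "B1 \<in> Ob C" "B2 \<in> Ob C" using assms hom_ob2 by blast+
  have X: "X \<in> Ob C" using assms hom_ob1 by blast
  have "bpr1 C B1 B2 \<cdot> (bin1 C B1 B2 \<cdot> x \<oplus> bin2 C B1 B2 \<cdot> y)
     = bpr1 C B1 B2 \<cdot> (bin1 C B1 B2 \<cdot> x) \<oplus> bpr1 C B1 B2 \<cdot> (bin2 C B1 B2 \<cdot> y)"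
    by (rule distl[OF comp_hom[OF assms(1) bin1_hom[OF o]] comp_hom[OF assms(2) bin2_hom[OF o]] bpr1_hom[OF o]])
  also have "\<dots> = (bpr1 C B1 B2 \<cdot> bin1 C B1 B2) \<cdot> x \<oplus> (bpr1 C B1 B2 \<cdot> bin2 C B1 B2) \<cdot> y"
    using assoc[OF assms(1) bin1_hom[OF o] bpr1_hom[OF o]] assoc[OF assms(2) bin2_hom[OF o] bpr1_hom[OF o]] by simp
  also have "\<dots> = x \<oplus> Z X B1" using p1i1[OF o] p1i2[OF o] id_l[OF assms(1)] comp_zer_l[OF assms(2) o(1)] by simp
  also have "\<dots> = x" using add_0 assms by metis
  finally show ?thesis .
qed

lemma tuple_pr2: assumes "x \<in> Hom C X B1" "y \<in> Hom C X B2"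
  shows "bpr2 C B1 B2 \<cdot> (bin1 C B1 B2 \<cdot> x \<oplus> bin2 C B1 B2 \<cdot> y) = y"
proof -
  have o: "B1 \<in> Ob C" "B2 \<in> Ob C" using assms hom_ob2 by blast+
  have "bpr2 C B1 B2 \<cdot> (bin1 C B1 B2 \<cdot> x \<oplus> bin2 C B1 B2 \<cdot> y)
     = bpr2 C B1 B2 \<cdot> (bin1 C B1 B2 \<cdot> x) \<oplus> bpr2 C B1 B2 \<cdot> (bin2 C B1 B2 \<cdot> y)"
    by (rule distl[OF comp_hom[OF assms(1) bin1_hom[OF o]] comp_hom[OF assms(2) bin2_hom[OF o]] bpr2_hom[OF o]])
  also have "\<dots> = (bpr2 C B1 B2 \<cdot> bin1 C B1 B2) \<cdot> x \<oplus> (bpr2 C B1 B2 \<cdot> bin2 C B1 B2) \<cdot> y"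
    using assoc[OF assms(1) bin1_hom[OF o] bpr2_hom[OF o]] assoc[OF assms(2) bin2_hom[OF o] bpr2_hom[OF o]] by simp
  also have "\<dots> = Z X B2 \<oplus> y" using p2i1[OF o] p2i2[OF o] id_l[OF assms(2)] comp_zer_l[OF assms(1) o(2)] by simp
  also have "\<dots> = y" using add_0_l assms by metis
  finally show ?thesis .
qed

lemma ext_out: assumes o: "B1 \<in> Ob C" "B2 \<in> Ob C"
  and "w1 \<in> Hom C (bsum C B1 B2) X" "w2 \<in> Hom C (bsum C B1 B2) X"
  "w1 \<cdot> bin1 C B1 B2 = w2 \<cdot> bin1 C B1 B2" "w1 \<cdot> bin2 C B1 B2 = w2 \<cdot> bin2 C B1 B2"
  shows "w1 = w2"
proof -
  have e: "w = (w \<cdot> bin1 C B1 B2) \<cdot> bpr1 C B1 B2 \<oplus> (w \<cdot> bin2 C B1 B2) \<cdot> bpr2 C B1 B2"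
    if w: "w \<in> Hom C (bsum C B1 B2) X" for w
  proof -
    have "w = w \<cdot> idm C (bsum C B1 B2)" using id_r w by metis
    also have "\<dots> = w \<cdot> (bin1 C B1 B2 \<cdot> bpr1 C B1 B2) \<oplus> w \<cdot> (bin2 C B1 B2 \<cdot> bpr2 C B1 B2)"
      using bip_id[OF o] distl[OF comp_hom[OF bpr1_hom[OF o] bin1_hom[OF o]] comp_hom[OF bpr2_hom[OF o] bin2_hom[OF o]] w] by simp
    also have "\<dots> = (w \<cdot> bin1 C B1 B2) \<cdot> bpr1 C B1 B2 \<oplus> (w \<cdot> bin2 C B1 B2) \<cdot> bpr2 C B1 B2"
      using assoc[OF bpr1_hom[OF o] bin1_hom[OF o] w] assoc[OF bpr2_hom[OF o] bin2_hom[OF o] w] by simp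
    finally show ?thesis .
  qed
  show ?thesis using e[OF assms(3)] e[OF assms(4)] assms(5,6) by simp
qed

lemma ext_in: assumes o: "B1 \<in> Ob C" "B2 \<in> Ob C"
  and "w1 \<in> Hom C X (bsum C B1 B2)" "w2 \<in> Hom C X (bsum C B1 B2)"
  "bpr1 C B1 B2 \<cdot> w1 = bpr1 C B1 B2 \<cdot> w2" "bpr2 C B1 B2 \<cdot> w1 = bpr2 C B1 B2 \<cdot> w2"
  shows "w1 = w2"
proof -
  have e: "w = bin1 C B1 B2 \<cdot> (bpr1 C B1 B2 \<cdot> w) \<oplus> bin2 C B1 B2 \<cdot> (bpr2 C B1 B2 \<cdot> w)"
    if w: "w \<in> Hom C X (bsum C B1 B2)" for w
  proof -
    have "w = idm C (bsum C B1 B2) \<cdot> w" using id_l w by metis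
    also have "\<dots> = (bin1 C B1 B2 \<cdot> bpr1 C B1 B2) \<cdot> w \<oplus> (bin2 C B1 B2 \<cdot> bpr2 C B1 B2) \<cdot> w"
      using bip_id[OF o] distr[OF comp_hom[OF bpr1_hom[OF o] bin1_hom[OF o]] comp_hom[OF bpr2_hom[OF o] bin2_hom[OF o]] w] by simp
    also have "\<dots> = bin1 C B1 B2 \<cdot> (bpr1 C B1 B2 \<cdot> w) \<oplus> bin2 C B1 B2 \<cdot> (bpr2 C B1 B2 \<cdot> w)"
      using assoc[OF w bpr1_hom[OF o] bin1_hom[OF o]] assoc[OF w bpr2_hom[OF o] bin2_hom[OF o]] by simp
    finally show ?thesis .
  qed
  show ?thesis using e[OF assms(3)] e[OF assms(4)] assms(5,6) by simp
qed

lemma copair_comp: assumes "u \<in> Hom C B1 X" "v \<in> Hom C B2 X" "g \<in> Hom C Y (bsum C B1 B2)"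
  shows "(u \<cdot> bpr1 C B1 B2 \<oplus> v \<cdot> bpr2 C B1 B2) \<cdot> g
       = u \<cdot> (bpr1 C B1 B2 \<cdot> g) \<oplus> v \<cdot> (bpr2 C B1 B2 \<cdot> g)"
proof -
  have o: "B1 \<in> Ob C" "B2 \<in> Ob C" using assms hom_ob1 by blast+
  have "(u \<cdot> bpr1 C B1 B2 \<oplus> v \<cdot> bpr2 C B1 B2) \<cdot> g
       = (u \<cdot> bpr1 C B1 B2) \<cdot> g \<oplus> (v \<cdot> bpr2 C B1 B2) \<cdot> g"
    by (rule distr[OF comp_hom[OF bpr1_hom[OF o] assms(1)] comp_hom[OF bpr2_hom[OF o] assms(2)] assms(3)])
  also have "\<dots> = u \<cdot> (bpr1 C B1 B2 \<cdot> g) \<oplus> v \<cdot> (bpr2 C B1 B2 \<cdot> g)"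
    using assoc[OF assms(3) bpr1_hom[OF o] assms(1)] assoc[OF assms(3) bpr2_hom[OF o] assms(2)] by simp
  finally show ?thesis .
qed

end



lemma pushoutI:
  assumes "i \<in> Hom C A B" "t \<in> Hom C A D" "t' \<in> Hom C B S" "j \<in> Hom C D S"
    "cmp C t' i = cmp C j t"
    "\<And>X u v. X \<in> Ob C \<Longrightarrow> u \<in> Hom C B X \<Longrightarrow> v \<in> Hom C D X \<Longrightarrow> cmp C u i = cmp C v t \<Longrightarrow>
        \<exists>w \<in> Hom C S X. cmp C w t' = u \<and> cmp C w j = v"
    "\<And>X w1 w2. w1 \<in> Hom C S X \<Longrightarrow> w2 \<in> Hom C S X \<Longrightarrow> cmp C w1 t' = cmp C w2 t' \<Longrightarrow>
        cmp C w1 j = cmp C w2 j \<Longrightarrow> w1 = w2"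
  shows "is_pushout C i t t' j"
proof -
  have h: "i \<in> Mor C" "t \<in> Mor C" "t' \<in> Mor C" "j \<in> Mor C" "src C t = src C i" "src C t' = tgt C i"
     "src C j = tgt C t" "tgt C j = tgt C t'" "tgt C i = B" "tgt C t = D" "tgt C t' = S"
    using assms(1-4) by (auto simp: Hom_def)
  have u: "\<forall>X\<in>Ob C. \<forall>u \<in> Hom C (tgt C i) X. \<forall>v \<in> Hom C (tgt C t) X.
        cmp C u i = cmp C v t \<longrightarrow>
        (\<exists>!w. w \<in> Hom C (tgt C t') X \<and> cmp C w t' = u \<and> cmp C w j = v)"
  proof (intro ballI impI)
    fix X u v assume a: "X \<in> Ob C" "u \<in> Hom C (tgt C i) X" "v \<in> Hom C (tgt C t) X" "cmp C u i = cmp C v t"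
    obtain w where w: "w \<in> Hom C S X" "cmp C w t' = u" "cmp C w j = v" using assms(6)[OF a(1) _ _ a(4)] a(2,3) h by auto
    show "\<exists>!w. w \<in> Hom C (tgt C t') X \<and> cmp C w t' = u \<and> cmp C w j = v"
    proof (rule ex1I[of _ w])
      show "w \<in> Hom C (tgt C t') X \<and> cmp C w t' = u \<and> cmp C w j = v" using w h by simp
      fix y assume "y \<in> Hom C (tgt C t') X \<and> cmp C y t' = u \<and> cmp C y j = v"
      then show "y = w" using assms(7)[of y X w] w h by simp
    qed
  qed
  show ?thesis unfolding is_pushout_def using h u assms(5) by blast
qed

lemma pullbackI:
  assumes "h \<in> Hom C P1 E" "t \<in> Hom C P2 E" "q \<in> Hom C P P1" "p \<in> Hom C P P2"
    "cmp C h q = cmp C t p"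
    "\<And>X u v. X \<in> Ob C \<Longrightarrow> u \<in> Hom C X P1 \<Longrightarrow> v \<in> Hom C X P2 \<Longrightarrow> cmp C h u = cmp C t v \<Longrightarrow>
        \<exists>w \<in> Hom C X P. cmp C q w = u \<and> cmp C p w = v"
    "\<And>X w1 w2. w1 \<in> Hom C X P \<Longrightarrow> w2 \<in> Hom C X P \<Longrightarrow> cmp C q w1 = cmp C q w2 \<Longrightarrow>
        cmp C p w1 = cmp C p w2 \<Longrightarrow> w1 = w2"
  shows "is_pullback C h t q p"
proof -
  have hh: "h \<in> Mor C" "t \<in> Mor C" "q \<in> Mor C" "p \<in> Mor C" "tgt C t = tgt C h" "tgt C q = src C h"
     "tgt C p = src C t" "src C p = src C q" "src C h = P1" "src C t = P2" "src C q = P"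
    using assms(1-4) by (auto simp: Hom_def)
  have u: "\<forall>X\<in>Ob C. \<forall>u \<in> Hom C X (src C h). \<forall>v \<in> Hom C X (src C t).
        cmp C h u = cmp C t v \<longrightarrow>
        (\<exists>!w. w \<in> Hom C X (src C q) \<and> cmp C q w = u \<and> cmp C p w = v)"
  proof (intro ballI impI)
    fix X u v assume a: "X \<in> Ob C" "u \<in> Hom C X (src C h)" "v \<in> Hom C X (src C t)" "cmp C h u = cmp C t v"
    obtain w where w: "w \<in> Hom C X P" "cmp C q w = u" "cmp C p w = v" using assms(6)[OF a(1) _ _ a(4)] a(2,3) hh by auto
    show "\<exists>!w. w \<in> Hom C X (src C q) \<and> cmp C q w = u \<and> cmp C p w = v"
    proof (rule ex1I[of _ w])
      show "w \<in> Hom C X (src C q) \<and> cmp C q w = u \<and> cmp C p w = v" using w hh by simp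
      fix y assume "y \<in> Hom C X (src C q) \<and> cmp C q y = u \<and> cmp C p y = v"
      then show "y = w" using assms(7)[of y X w] w hh by simp
    qed
  qed
  show ?thesis unfolding is_pullback_def using hh u assms(5) by blast
qed

lemma kernelI:
  assumes "k \<in> Hom C K B" "d \<in> Hom C B D" "cmp C d k = zer C K D"
   "\<And>X g. X \<in> Ob C \<Longrightarrow> g \<in> Hom C X B \<Longrightarrow> cmp C d g = zer C X D \<Longrightarrow> \<exists>h\<in>Hom C X K. cmp C k h = g"
   "\<And>X h1 h2. h1 \<in> Hom C X K \<Longrightarrow> h2 \<in> Hom C X K \<Longrightarrow> cmp C k h1 = cmp C k h2 \<Longrightarrow> h1 = h2"
  shows "is_kernel C k d"
proof -
  have hh: "k \<in> Mor C" "d \<in> Mor C" "tgt C k = src C d" "src C k = K" "src C d = B" "tgt C d = D"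
    using assms(1,2) by (auto simp: Hom_def)
  have u: "\<forall>X\<in>Ob C. \<forall>g \<in> Hom C X (src C d). cmp C d g = zer C X (tgt C d) \<longrightarrow>
        (\<exists>!h. h \<in> Hom C X (src C k) \<and> cmp C k h = g)"
  proof (intro ballI impI)
    fix X g assume a: "X \<in> Ob C" "g \<in> Hom C X (src C d)" "cmp C d g = zer C X (tgt C d)"
    obtain h where w: "h \<in> Hom C X K" "cmp C k h = g" using assms(4)[OF a(1)] a(2,3) hh by auto
    show "\<exists>!h. h \<in> Hom C X (src C k) \<and> cmp C k h = g"
    proof (rule ex1I[of _ h])
      show "h \<in> Hom C X (src C k) \<and> cmp C k h = g" using w hh by simp
      fix y assume "y \<in> Hom C X (src C k) \<and> cmp C k y = g"
      then show "y = h" using assms(5)[of y X h] w hh by simp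
    qed
  qed
  show ?thesis unfolding is_kernel_def using hh u assms(3) by simp
qed

lemma cokernelI:
  assumes "k \<in> Hom C K B" "d \<in> Hom C B D" "cmp C d k = zer C K D"
   "\<And>X g. X \<in> Ob C \<Longrightarrow> g \<in> Hom C B X \<Longrightarrow> cmp C g k = zer C K X \<Longrightarrow> \<exists>h\<in>Hom C D X. cmp C h d = g"
   "\<And>X h1 h2. h1 \<in> Hom C D X \<Longrightarrow> h2 \<in> Hom C D X \<Longrightarrow> cmp C h1 d = cmp C h2 d \<Longrightarrow> h1 = h2"
  shows "is_cokernel C d k"
proof -
  have hh: "k \<in> Mor C" "d \<in> Mor C" "tgt C k = src C d" "src C k = K" "tgt C k = B" "tgt C d = D"
    using assms(1,2) by (auto simp: Hom_def)
  have u: "\<forall>X\<in>Ob C. \<forall>g \<in> Hom C (tgt C k) X. cmp C g k = zer C (src C k) X \<longrightarrow>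
        (\<exists>!h. h \<in> Hom C (tgt C d) X \<and> cmp C h d = g)"
  proof (intro ballI impI)
    fix X g assume a: "X \<in> Ob C" "g \<in> Hom C (tgt C k) X" "cmp C g k = zer C (src C k) X"
    obtain h where w: "h \<in> Hom C D X" "cmp C h d = g" using assms(4)[OF a(1)] a(2,3) hh by auto
    show "\<exists>!h. h \<in> Hom C (tgt C d) X \<and> cmp C h d = g"
    proof (rule ex1I[of _ h])
      show "h \<in> Hom C (tgt C d) X \<and> cmp C h d = g" using w hh by simp
      fix y assume "y \<in> Hom C (tgt C d) X \<and> cmp C y d = g"
      then show "y = h" using assms(5)[of y X h] w hh by simp
    qed
  qed
  show ?thesis unfolding is_cokernel_def using hh u assms(3) by simp
qed

lemma pushoutD:
  assumes "is_pushout C i t t' j" "X \<in> Ob C" "u \<in> Hom C (tgt C i) X" "v \<in> Hom C (tgt C t) X"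
    "cmp C u i = cmp C v t"
  shows "\<exists>!w. w \<in> Hom C (tgt C t') X \<and> cmp C w t' = u \<and> cmp C w j = v"
  using assms unfolding is_pushout_def
  by (elim conjE) (drule bspec, rule assms, drule bspec, rule assms, drule bspec, rule assms, erule mp, rule assms)

lemma pushout_basic: assumes "is_pushout C i t t' j"
  shows "i \<in> Hom C (src C i) (tgt C i)" "t \<in> Hom C (src C i) (tgt C t)"
   "t' \<in> Hom C (tgt C i) (tgt C t')" "j \<in> Hom C (tgt C t) (tgt C t')" "cmp C t' i = cmp C j t"
  using assms unfolding is_pushout_def Hom_def by auto




locale square = ac +
  fixes A B A' B' i f f' i'
  assumes i: "i \<in> Hom C A B" and f: "f \<in> Hom C A A'" and f': "f' \<in> Hom C B B'"
    and i': "i' \<in> Hom C A' B'" and comm: "cmp C f' i = cmp C i' f"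
begin

abbreviation "S \<equiv> bsum C B A'"
abbreviation "j1 \<equiv> bin1 C B A'"
abbreviation "j2 \<equiv> bin2 C B A'"
abbreviation "q1 \<equiv> bpr1 C B A'"
abbreviation "q2 \<equiv> bpr2 C B A'"
abbreviation "mu \<equiv> j1 \<cdot> i \<oplus> j2 \<cdot> ng f"
abbreviation "eps \<equiv> f' \<cdot> q1 \<oplus> i' \<cdot> q2"

lemma obs: "A \<in> Ob C" "B \<in> Ob C" "A' \<in> Ob C" "B' \<in> Ob C"
  using i f' i' hom_ob1 hom_ob2 by blast+

lemma mu_hom: "mu \<in> Hom C A S" by (rule tuple_hom[OF i neg_hom[OF f]])
lemma eps_hom: "eps \<in> Hom C S B'" by (rule copair_hom[OF f' i'])
lemma eps_j1: "eps \<cdot> j1 = f'" by (rule copair_in1[OF f' i'])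
lemma eps_j2: "eps \<cdot> j2 = i'" by (rule copair_in2[OF f' i'])
lemma q1_mu: "q1 \<cdot> mu = i" by (rule tuple_pr1[OF i neg_hom[OF f]])
lemma q2_mu: "q2 \<cdot> mu = ng f" by (rule tuple_pr2[OF i neg_hom[OF f]])
lemma eps_comp: "g \<in> Hom C X S \<Longrightarrow> eps \<cdot> g = f' \<cdot> (q1 \<cdot> g) \<oplus> i' \<cdot> (q2 \<cdot> g)"
  by (rule copair_comp[OF f' i'])

lemma eps_mu: "eps \<cdot> mu = Z A B'"
proof -
  have "eps \<cdot> mu = f' \<cdot> i \<oplus> i' \<cdot> ng f" using eps_comp[OF mu_hom] q1_mu q2_mu by simp
  also have "\<dots> = i' \<cdot> f \<oplus> ng (i' \<cdot> f)" using comm comp_neg_r[OF f i'] by simp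
  also have "\<dots> = Z A B'" by (rule add_neg[OF comp_hom[OF f i']])
  finally show ?thesis .
qed

lemma q1_hom: "q1 \<in> Hom C S B" using bpr1_hom obs by blast
lemma q2_hom: "q2 \<in> Hom C S A'" using bpr2_hom obs by blast
lemma j1_hom: "j1 \<in> Hom C B S" using bin1_hom obs by blast
lemma j2_hom: "j2 \<in> Hom C A' S" using bin2_hom obs by blast

lemma mu_comp: assumes "h \<in> Hom C X A"
  shows "q1 \<cdot> (mu \<cdot> h) = i \<cdot> h" "q2 \<cdot> (mu \<cdot> h) = ng (f \<cdot> h)"
proof -
  show "q1 \<cdot> (mu \<cdot> h) = i \<cdot> h" using assoc[OF assms mu_hom q1_hom] q1_mu by simp
  show "q2 \<cdot> (mu \<cdot> h) = ng (f \<cdot> h)" using assoc[OF assms mu_hom q2_hom] q2_mu comp_neg_l[OF f assms] by simp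
qed

lemma cok_pushout: assumes ck: "is_cokernel C eps mu" shows "is_pushout C i f f' i'"
proof (rule pushoutI[OF i f f' i' comm])
  have se: "src C eps = S" "tgt C eps = B'" "src C mu = A" using eps_hom mu_hom hom_src hom_tgt by blast+
  fix X u v assume a: "X \<in> Ob C" "u \<in> Hom C B X" "v \<in> Hom C A' X" "u \<cdot> i = v \<cdot> f"
  let ?g = "u \<cdot> q1 \<oplus> v \<cdot> q2"
  have g: "?g \<in> Hom C S X" by (rule copair_hom[OF a(2,3)])
  have "?g \<cdot> mu = u \<cdot> i \<oplus> v \<cdot> ng f" using copair_comp[OF a(2,3) mu_hom] q1_mu q2_mu by simp
  also have "\<dots> = v \<cdot> f \<oplus> ng (v \<cdot> f)" using a(4) comp_neg_r[OF f a(3)] by simp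
  also have "\<dots> = Z A X" by (rule add_neg[OF comp_hom[OF f a(3)]])
  finally have gz: "?g \<cdot> mu = Z (src C mu) X" using se by simp
  obtain h where h: "h \<in> Hom C B' X" "h \<cdot> eps = ?g" using cok_fac[OF ck _ gz] g se by metis
  have "h \<cdot> f' = u" using assoc[OF j1_hom eps_hom h(1)] eps_j1 h(2) copair_in1[OF a(2,3)] by simp
  moreover have "h \<cdot> i' = v" using assoc[OF j2_hom eps_hom h(1)] eps_j2 h(2) copair_in2[OF a(2,3)] by simp
  ultimately show "\<exists>w\<in>Hom C B' X. w \<cdot> f' = u \<and> w \<cdot> i' = v" using h(1) by blast
next
  have se: "src C eps = S" "tgt C eps = B'" "src C mu = A" using eps_hom mu_hom hom_src hom_tgt by blast+
  fix X w1 w2 assume a: "w1 \<in> Hom C B' X" "w2 \<in> Hom C B' X" "w1 \<cdot> f' = w2 \<cdot> f'" "w1 \<cdot> i' = w2 \<cdot> i'"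
  have "w1 \<cdot> eps = w2 \<cdot> eps"
  proof (rule ext_out[OF obs(2,3) comp_hom[OF eps_hom a(1)] comp_hom[OF eps_hom a(2)]])
    show "w1 \<cdot> eps \<cdot> j1 = w2 \<cdot> eps \<cdot> j1"
      using assoc[OF j1_hom eps_hom a(1)] assoc[OF j1_hom eps_hom a(2)] eps_j1 a(3) by simp
    show "w1 \<cdot> eps \<cdot> j2 = w2 \<cdot> eps \<cdot> j2"
      using assoc[OF j2_hom eps_hom a(1)] assoc[OF j2_hom eps_hom a(2)] eps_j2 a(4) by simp
  qed
  then show "w1 = w2" using cok_epi[OF ck] a(1,2) se by metis
qed

lemma ker_pullback: assumes kk: "is_kernel C mu eps" shows "is_pullback C f' i' i f"
proof (rule pullbackI[OF f' i' i f comm])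
  have se: "src C eps = S" "tgt C eps = B'" "src C mu = A" using eps_hom mu_hom hom_src hom_tgt by blast+
  fix X u v assume a: "X \<in> Ob C" "u \<in> Hom C X B" "v \<in> Hom C X A'" "f' \<cdot> u = i' \<cdot> v"
  let ?g = "j1 \<cdot> u \<oplus> j2 \<cdot> ng v"
  have nv: "ng v \<in> Hom C X A'" by (rule neg_hom[OF a(3)])
  have g: "?g \<in> Hom C X S" by (rule tuple_hom[OF a(2) nv])
  have "eps \<cdot> ?g = f' \<cdot> u \<oplus> i' \<cdot> ng v" using eps_comp[OF g] tuple_pr1[OF a(2) nv] tuple_pr2[OF a(2) nv] by simp
  also have "\<dots> = i' \<cdot> v \<oplus> ng (i' \<cdot> v)" using a(4) comp_neg_r[OF a(3) i'] by simp
  also have "\<dots> = Z X B'" by (rule add_neg[OF comp_hom[OF a(3) i']])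
  finally have gz: "eps \<cdot> ?g = Z X (tgt C eps)" using se by simp
  obtain h where h: "h \<in> Hom C X A" "mu \<cdot> h = ?g" using ker_fac[OF kk _ gz] g se by metis
  have "i \<cdot> h = u" using mu_comp(1)[OF h(1)] h(2) tuple_pr1[OF a(2) nv] by simp
  moreover have "ng (f \<cdot> h) = ng v" using mu_comp(2)[OF h(1)] h(2) tuple_pr2[OF a(2) nv] by simp
  then have "f \<cdot> h = v" using neg_neg[OF comp_hom[OF h(1) f]] neg_neg[OF a(3)] by metis
  ultimately show "\<exists>w\<in>Hom C X A. i \<cdot> w = u \<and> f \<cdot> w = v" using h(1) by blast
next
  have se: "src C eps = S" "tgt C eps = B'" "src C mu = A" using eps_hom mu_hom hom_src hom_tgt by blast+
  fix X w1 w2 assume a: "w1 \<in> Hom C X A" "w2 \<in> Hom C X A" "i \<cdot> w1 = i \<cdot> w2" "f \<cdot> w1 = f \<cdot> w2"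
  have "mu \<cdot> w1 = mu \<cdot> w2"
    by (rule ext_in[OF obs(2,3) comp_hom[OF a(1) mu_hom] comp_hom[OF a(2) mu_hom]])
       (use mu_comp[OF a(1)] mu_comp[OF a(2)] a(3,4) in simp_all)
  then show "w1 = w2" using ker_mono[OF kk] a(1,2) se by metis
qed

end



context ac begin

lemma add_lcancel: assumes "a \<in> Hom C X Y" "x \<in> Hom C X Y" "y \<in> Hom C X Y" "a \<oplus> x = a \<oplus> y"
  shows "x = y"
proof -
  have "x = (ng a \<oplus> a) \<oplus> x" using add_neg_l[OF assms(1)] add_0_l[OF assms(2)] by simp
  also have "\<dots> = ng a \<oplus> (a \<oplus> y)" using add_assoc[OF neg_hom[OF assms(1)] assms(1,2)] assms(4) by simp
  also have "\<dots> = (ng a \<oplus> a) \<oplus> y" using add_assoc[OF neg_hom[OF assms(1)] assms(1,3)] by simp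
  also have "\<dots> = y" using add_neg_l[OF assms(1)] add_0_l[OF assms(3)] by simp
  finally show ?thesis .
qed

lemma add_aux: assumes "x \<in> Hom C X Y" "v \<in> Hom C X Y" shows "x \<oplus> (v \<oplus> ng x) = v"
proof -
  have "x \<oplus> (v \<oplus> ng x) = (x \<oplus> v) \<oplus> ng x" using add_assoc[OF assms neg_hom[OF assms(1)]] by simp
  also have "\<dots> = (v \<oplus> x) \<oplus> ng x" using add_comm[OF assms] by simp
  also have "\<dots> = v \<oplus> (x \<oplus> ng x)" using add_assoc[OF assms(2,1) neg_hom[OF assms(1)]] by simp
  also have "\<dots> = v" using add_neg[OF assms(1)] add_0[OF assms(2)] by simp
  finally show ?thesis .
qed

lemma isoI: assumes "f \<in> Hom C X Y" "g \<in> Hom C Y X" "g \<cdot> f = idm C X" "f \<cdot> g = idm C Y"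
  shows "iso C f"
  unfolding iso_def using assms hom_mor[OF assms(1)] hom_src[OF assms(1)] hom_tgt[OF assms(1)] by blast

lemma iso_id: "X \<in> Ob C \<Longrightarrow> iso C (idm C X)"
  using isoI[OF id_hom id_hom] id_l[OF id_hom] by metis

end

locale we = ac +
  fixes W assumes WE: "weakly_exact C W"
begin

lemmas WD = WE[unfolded weakly_exact_def]
lemmas wx1 = WD[THEN conjunct1]
lemmas wx2 = WD[THEN conjunct2, THEN conjunct1]
lemmas wx7 = WD[THEN conjunct2, THEN conjunct2, THEN conjunct2, THEN conjunct2, THEN conjunct2, THEN conjunct2]

lemma W_kc: assumes "(k, d) \<in> W" shows "kc_pair C k d" using bspec[OF wx1 assms] by simp
lemma W_ker: "(k, d) \<in> W \<Longrightarrow> is_kernel C k d" using W_kc unfolding kc_pair_def by simp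
lemma W_cok: "(k, d) \<in> W \<Longrightarrow> is_cokernel C d k" using W_kc unfolding kc_pair_def by simp

lemma W_iso: "(k, d) \<in> W \<Longrightarrow> kc_pair C k' d' \<Longrightarrow> iso C a \<Longrightarrow> iso C b \<Longrightarrow> iso C c \<Longrightarrow>
   a \<in> Hom C (src C k) (src C k') \<Longrightarrow> b \<in> Hom C (tgt C k) (tgt C k') \<Longrightarrow>
   c \<in> Hom C (tgt C d) (tgt C d') \<Longrightarrow> b \<cdot> k = k' \<cdot> a \<Longrightarrow> c \<cdot> d = d' \<cdot> b \<Longrightarrow> (k', d') \<in> W"
proof -
  assume a1: "(k, d) \<in> W"
  have H: "\<forall>i' d' a b c. kc_pair C i' d' \<and> iso C a \<and> iso C b \<and> iso C c \<and>
        a \<in> Hom C (src C k) (src C i') \<and> b \<in> Hom C (tgt C k) (tgt C i') \<and>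
        c \<in> Hom C (tgt C d) (tgt C d') \<and>
        cmp C b k = cmp C i' a \<and> cmp C c d = cmp C d' b \<longrightarrow> (i', d') \<in> W"
    using bspec[OF wx2 a1] by simp
  show "kc_pair C k' d' \<Longrightarrow> iso C a \<Longrightarrow> iso C b \<Longrightarrow> iso C c \<Longrightarrow>
   a \<in> Hom C (src C k) (src C k') \<Longrightarrow> b \<in> Hom C (tgt C k) (tgt C k') \<Longrightarrow>
   c \<in> Hom C (tgt C d) (tgt C d') \<Longrightarrow> b \<cdot> k = k' \<cdot> a \<Longrightarrow> c \<cdot> d = d' \<cdot> b \<Longrightarrow> (k', d') \<in> W"
    using H[rule_format, of k' d' a b c] by simp
qed

lemma E2op: assumes "adm_epic C W h" "t \<in> Mor C" "tgt C t = tgt C h" "is_pullback C h t q p"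
  shows "adm_epic C W p"
proof -
  have "\<forall>q p. is_pullback C h t q p \<longrightarrow> adm_epic C W p" using wx7[rule_format, of h t] assms(1-3) by simp
  then show ?thesis using assms(4) by simp
qed

lemma W_newker: assumes kd: "(k, d) \<in> W" and k'd: "is_kernel C k' d" shows "(k', d) \<in> W"
proof -
  have kk: "is_kernel C k d" and ck: "is_cokernel C d k" using W_ker W_cok kd by blast+
  note b1 = ker_basic[OF kk] and b2 = ker_basic[OF k'd]
  obtain a where a: "a \<in> Hom C (src C k') (src C k)" "k \<cdot> a = k'" using ker_fac[OF kk b2(1) b2(3)] by blast
  obtain b where b: "b \<in> Hom C (src C k) (src C k')" "k' \<cdot> b = k" using ker_fac[OF k'd b1(1) b1(3)] by blast
  have K: "src C k \<in> Ob C" "src C k' \<in> Ob C" using b1(1) b2(1) hom_ob1 by blast+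
  have ab: "a \<cdot> b = idm C (src C k)"
    by (rule ker_mono[OF kk comp_hom[OF b(1) a(1)] id_hom[OF K(1)]])
       (use assoc[OF b(1) a(1) b1(1)] a(2) b(2) id_r[OF b1(1)] in simp)
  have ba: "b \<cdot> a = idm C (src C k')"
    by (rule ker_mono[OF k'd comp_hom[OF a(1) b(1)] id_hom[OF K(2)]])
       (use assoc[OF a(1) b(1) b2(1)] a(2) b(2) id_r[OF b2(1)] in simp)
  have isob: "iso C b" by (rule isoI[OF b(1) a(1) ab ba])
  have ck': "is_cokernel C d k'"
  proof (rule cokernelI[OF b2(1,2,3)])
    fix X g assume g: "X \<in> Ob C" "g \<in> Hom C (src C d) X" "g \<cdot> k' = Z (src C k') X"
    have "g \<cdot> k = (g \<cdot> k') \<cdot> b" using assoc[OF b(1) b2(1) g(2)] b(2) by simp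
    also have "\<dots> = Z (src C k) X" using g(3) comp_zer_l[OF b(1) g(1)] by simp
    finally have gz: "g \<cdot> k = Z (src C k) X" .
    have "tgt C k = src C d" using b1(1) hom_tgt by blast
    then obtain h where "h \<in> Hom C (tgt C d) X" "h \<cdot> d = g" using cok_fac[OF ck _ gz] g(2) by metis
    then show "\<exists>h\<in>Hom C (tgt C d) X. h \<cdot> d = g" by blast
  next
    fix X h1 h2 assume "h1 \<in> Hom C (tgt C d) X" "h2 \<in> Hom C (tgt C d) X" "h1 \<cdot> d = h2 \<cdot> d"
    then show "h1 = h2" using cok_epi[OF ck] by blast
  qed
  have B: "src C d \<in> Ob C" "tgt C d \<in> Ob C" using b1(2) hom_ob1 hom_ob2 by blast+
  have t1: "tgt C k = src C d" "tgt C k' = src C d" using b1(1) b2(1) hom_tgt by blast+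
  show ?thesis
  proof (rule W_iso[OF kd _ isob iso_id[OF B(1)] iso_id[OF B(2)] b(1)])
    show "kc_pair C k' d" unfolding kc_pair_def using k'd ck' by blast
    show "idm C (src C d) \<in> Hom C (tgt C k) (tgt C k')" using t1 id_hom[OF B(1)] by simp
    show "idm C (tgt C d) \<in> Hom C (tgt C d) (tgt C d)" using id_hom[OF B(2)] .
    show "idm C (src C d) \<cdot> k = k' \<cdot> b" using t1 id_l[OF b1(1)] b(2) by simp
    show "idm C (tgt C d) \<cdot> d = d \<cdot> idm C (src C d)" using id_l[OF b1(2)] id_r[OF b1(2)] by simp
  qed
qed

lemma W_newcok: assumes kd: "(k, d) \<in> W" and ck': "is_cokernel C d' k" shows "(k, d') \<in> W"
proof -
  have kk: "is_kernel C k d" and ck: "is_cokernel C d k" using W_ker W_cok kd by blast+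
  note b1 = cok_basic[OF ck] and b2 = cok_basic[OF ck']
  have sd: "src C d' = src C d" using b1(4) b2(4) by simp
  obtain c where c: "c \<in> Hom C (tgt C d) (tgt C d')" "c \<cdot> d = d'"
    using cok_fac[OF ck _ b2(3)] b2(2) sd by metis
  obtain e where e: "e \<in> Hom C (tgt C d') (tgt C d)" "e \<cdot> d' = d"
    using cok_fac[OF ck' _ b1(3)] b1(2) sd by metis
  have D: "tgt C d \<in> Ob C" "tgt C d' \<in> Ob C" using b1(2) b2(2) hom_ob2 by blast+
  have ec: "e \<cdot> c = idm C (tgt C d)"
    by (rule cok_epi[OF ck comp_hom[OF c(1) e(1)] id_hom[OF D(1)]])
       (use assoc[OF b1(2) c(1) e(1)] c(2) e(2) id_l[OF b1(2)] in simp)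
  have ce: "c \<cdot> e = idm C (tgt C d')"
    by (rule cok_epi[OF ck' comp_hom[OF e(1) c(1)] id_hom[OF D(2)]])
       (use assoc[OF b2(2) e(1) c(1)] c(2) e(2) id_l[OF b2(2)] in simp)
  have isoc: "iso C c" by (rule isoI[OF c(1) e(1) ec ce])
  have b2': "d' \<in> Hom C (src C d) (tgt C d')" using b2(2) sd by simp
  have kk': "is_kernel C k d'"
  proof (rule kernelI[OF b1(1) b2' b2(3)])
    fix X g assume g: "X \<in> Ob C" "g \<in> Hom C X (src C d)" "d' \<cdot> g = Z X (tgt C d')"
    have "d \<cdot> g = e \<cdot> (d' \<cdot> g)" using assoc[OF g(2) b2' e(1)] e(2) by simp
    also have "\<dots> = Z X (tgt C d)" using g(3) comp_zer_r[OF e(1) g(1)] by simp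
    finally have gz: "d \<cdot> g = Z X (tgt C d)" .
    obtain h where "h \<in> Hom C X (src C k)" "k \<cdot> h = g" using ker_fac[OF kk g(2) gz] by blast
    then show "\<exists>h\<in>Hom C X (src C k). k \<cdot> h = g" by blast
  next
    fix X h1 h2 assume "h1 \<in> Hom C X (src C k)" "h2 \<in> Hom C X (src C k)" "k \<cdot> h1 = k \<cdot> h2"
    then show "h1 = h2" using ker_mono[OF kk] by blast
  qed
  have K: "src C k \<in> Ob C" "src C d \<in> Ob C" using b1(1) hom_ob1 hom_ob2 by blast+
  show ?thesis
  proof (rule W_iso[OF kd _ iso_id[OF K(1)] iso_id[OF K(2)] isoc])
    show "kc_pair C k d'" unfolding kc_pair_def using kk' ck' by blast
    show "idm C (src C k) \<in> Hom C (src C k) (src C k)" using id_hom[OF K(1)] .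
    show "idm C (src C d) \<in> Hom C (tgt C k) (tgt C k)" using b1(4) id_hom[OF K(2)] by simp
    show "c \<in> Hom C (tgt C d) (tgt C d')" by (rule c(1))
    show "idm C (src C d) \<cdot> k = k \<cdot> idm C (src C k)" using id_l[OF b1(1)] id_r[OF b1(1)] by simp
    show "c \<cdot> d = d' \<cdot> idm C (src C d)" using c(2) id_r[OF b2'] by simp
  qed
qed

end



locale wsq = square + fixes W assumes WE: "weakly_exact C W"
begin

sublocale we C W by unfold_locales (rule WE)

lemma P3: assumes ip: "(i, p) \<in> W" and p': "p' \<in> Hom C B' E" and pf: "p' \<cdot> f' = p"
  and pi: "p' \<cdot> i' = Z A' E" and ki: "is_kernel C i' p'"
  shows "(mu, eps) \<in> W"
proof -
  have kip: "is_kernel C i p" using W_ker[OF ip] .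
  have p: "p \<in> Hom C B E" using comp_hom[OF f' p'] pf by simp
  have E: "E \<in> Ob C" using p' hom_ob2 by blast
  have sp: "src C p = B" "tgt C p = E" "src C p' = B'" "tgt C p' = E" "src C i = A" "src C i' = A'"
    using p p' i i' hom_src hom_tgt by blast+
  have pe: "p' \<cdot> eps = p \<cdot> q1"
  proof -
    have "p' \<cdot> eps = p' \<cdot> (f' \<cdot> q1) \<oplus> p' \<cdot> (i' \<cdot> q2)"
      by (rule distl[OF comp_hom[OF q1_hom f'] comp_hom[OF q2_hom i'] p'])
    also have "\<dots> = (p' \<cdot> f') \<cdot> q1 \<oplus> (p' \<cdot> i') \<cdot> q2"
      using assoc[OF q1_hom f' p'] assoc[OF q2_hom i' p'] by simp
    also have "\<dots> = p \<cdot> q1 \<oplus> Z S E" using pf pi comp_zer_l[OF q2_hom E] by simp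
    also have "\<dots> = p \<cdot> q1" by (rule add_0[OF comp_hom[OF q1_hom p]])
    finally show ?thesis .
  qed
  have pb: "is_pullback C p p' q1 eps"
  proof (rule pullbackI[OF p p' q1_hom eps_hom pe[symmetric]])
    fix X u v assume a: "X \<in> Ob C" "u \<in> Hom C X B" "v \<in> Hom C X B'" "p \<cdot> u = p' \<cdot> v"
    have fu: "f' \<cdot> u \<in> Hom C X B'" by (rule comp_hom[OF a(2) f'])
    let ?z = "v \<oplus> ng (f' \<cdot> u)"
    have z: "?z \<in> Hom C X B'" by (rule add_hom[OF a(3) neg_hom[OF fu]])
    have "p' \<cdot> ?z = p' \<cdot> v \<oplus> p' \<cdot> ng (f' \<cdot> u)" by (rule distl[OF a(3) neg_hom[OF fu] p'])
    also have "\<dots> = p' \<cdot> v \<oplus> ng ((p' \<cdot> f') \<cdot> u)"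
      using comp_neg_r[OF fu p'] assoc[OF a(2) f' p'] by simp
    also have "\<dots> = Z X E" using pf a(4) add_neg[OF comp_hom[OF a(3) p']] by simp
    finally have pz: "p' \<cdot> ?z = Z X (tgt C p')" using sp by simp
    obtain a' where a': "a' \<in> Hom C X A'" "i' \<cdot> a' = ?z" using ker_fac[OF ki _ pz] z sp by metis
    let ?w = "j1 \<cdot> u \<oplus> j2 \<cdot> a'"
    have w: "?w \<in> Hom C X S" by (rule tuple_hom[OF a(2) a'(1)])
    have "q1 \<cdot> ?w = u" by (rule tuple_pr1[OF a(2) a'(1)])
    moreover have "eps \<cdot> ?w = v"
      using eps_comp[OF w] tuple_pr1[OF a(2) a'(1)] tuple_pr2[OF a(2) a'(1)] a'(2) add_aux[OF fu a(3)] by simp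
    ultimately show "\<exists>w\<in>Hom C X S. q1 \<cdot> w = u \<and> eps \<cdot> w = v" using w by blast
  next
    fix X w1 w2 assume a: "w1 \<in> Hom C X S" "w2 \<in> Hom C X S" "q1 \<cdot> w1 = q1 \<cdot> w2" "eps \<cdot> w1 = eps \<cdot> w2"
    have h1: "q1 \<cdot> w1 \<in> Hom C X B" "q2 \<cdot> w1 \<in> Hom C X A'" "q2 \<cdot> w2 \<in> Hom C X A'"
      using comp_hom q1_hom q2_hom a by blast+
    have "f' \<cdot> (q1 \<cdot> w1) \<oplus> i' \<cdot> (q2 \<cdot> w1) = f' \<cdot> (q1 \<cdot> w1) \<oplus> i' \<cdot> (q2 \<cdot> w2)"
      using eps_comp[OF a(1)] eps_comp[OF a(2)] a(3,4) by simp
    then have "i' \<cdot> (q2 \<cdot> w1) = i' \<cdot> (q2 \<cdot> w2)"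
      using add_lcancel[OF comp_hom[OF h1(1) f'] comp_hom[OF h1(2) i'] comp_hom[OF h1(3) i']] by simp
    then have "q2 \<cdot> w1 = q2 \<cdot> w2" using ker_mono[OF ki] h1 sp by metis
    then show "w1 = w2" by (rule ext_in[OF obs(2,3) a(1,2) a(3)])
  qed
  have ae: "adm_epic C W p" unfolding adm_epic_def using ip by blast
  have "adm_epic C W eps" by (rule E2op[OF ae hom_mor[OF p'] _ pb]) (use sp in simp)
  then obtain k where ke: "(k, eps) \<in> W" unfolding adm_epic_def by blast
  have km: "is_kernel C mu eps"
  proof (rule kernelI[OF mu_hom eps_hom eps_mu])
    fix X g assume a: "X \<in> Ob C" "g \<in> Hom C X S" "eps \<cdot> g = Z X B'"
    have x: "q1 \<cdot> g \<in> Hom C X B" and y: "q2 \<cdot> g \<in> Hom C X A'" using comp_hom q1_hom q2_hom a(2) by blast+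
    have "p \<cdot> (q1 \<cdot> g) = (p' \<cdot> eps) \<cdot> g" using assoc[OF a(2) q1_hom p] pe by simp
    also have "\<dots> = p' \<cdot> Z X B'" using assoc[OF a(2) eps_hom p'] a(3) by simp
    also have "\<dots> = Z X (tgt C p)" using comp_zer_r[OF p' a(1)] sp by simp
    finally have pz: "p \<cdot> (q1 \<cdot> g) = Z X (tgt C p)" .
    obtain h where h: "h \<in> Hom C X A" "i \<cdot> h = q1 \<cdot> g" using ker_fac[OF kip _ pz] x sp by metis
    have fh: "f \<cdot> h \<in> Hom C X A'" by (rule comp_hom[OF h(1) f])
    have "i' \<cdot> (f \<cdot> h \<oplus> q2 \<cdot> g) = i' \<cdot> (f \<cdot> h) \<oplus> i' \<cdot> (q2 \<cdot> g)" by (rule distl[OF fh y i'])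
    also have "\<dots> = f' \<cdot> (q1 \<cdot> g) \<oplus> i' \<cdot> (q2 \<cdot> g)"
      using assoc[OF h(1) f i'] assoc[OF h(1) i f'] comm h(2) by simp
    also have "\<dots> = i' \<cdot> Z X A'" using eps_comp[OF a(2)] a(3) comp_zer_r[OF i' a(1)] by simp
    finally have eq: "i' \<cdot> (f \<cdot> h \<oplus> q2 \<cdot> g) = i' \<cdot> Z X A'" .
    have "f \<cdot> h \<oplus> q2 \<cdot> g = Z X A'"
      by (rule ker_mono[OF ki _ _ eq]) (use add_hom[OF fh y] zer_hom[OF a(1) obs(3)] sp in simp_all)
    then have "q2 \<cdot> g = ng (f \<cdot> h)" by (rule neg_unique[OF fh y])
    then have "mu \<cdot> h = g"
      by (intro ext_in[OF obs(2,3) comp_hom[OF h(1) mu_hom] a(2)]) (use mu_comp[OF h(1)] h(2) in simp_all)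
    then show "\<exists>h\<in>Hom C X A. mu \<cdot> h = g" using h(1) by blast
  next
    fix X h1 h2 assume a: "h1 \<in> Hom C X A" "h2 \<in> Hom C X A" "mu \<cdot> h1 = mu \<cdot> h2"
    have "i \<cdot> h1 = i \<cdot> h2" using mu_comp(1)[OF a(1)] mu_comp(1)[OF a(2)] a(3) by metis
    then show "h1 = h2" using ker_mono[OF kip] a(1,2) sp by metis
  qed
  show ?thesis by (rule W_newker[OF ke km])
qed

lemma po_iv: assumes po: "is_pushout C i f f' i'" and iq: "(i', q) \<in> W" and mi: "adm_monic C W i"
  shows "(i, q \<cdot> f') \<in> W"
proof -
  obtain p0 where ip0: "(i, p0) \<in> W" using mi unfolding adm_monic_def by blast
  have kq: "is_kernel C i' q" and cq: "is_cokernel C q i'" using W_ker W_cok iq by blast+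
  note qb = cok_basic[OF cq]
  have sq: "src C q = B'" "src C i' = A'" "tgt C i = B" "tgt C f = A'" "tgt C f' = B'" "src C i = A"
    using qb(4) i' i f f' hom_src hom_tgt by metis+
  have q: "q \<in> Hom C B' (tgt C q)" using qb(2) sq by simp
  have E: "tgt C q \<in> Ob C" using q hom_ob2 by blast
  have qi: "q \<cdot> i' = Z A' (tgt C q)" using qb(3) sq by simp
  have qfi: "(q \<cdot> f') \<cdot> i = Z A (tgt C q)"
  proof -
    have "(q \<cdot> f') \<cdot> i = q \<cdot> (i' \<cdot> f)" using assoc[OF i f' q] comm by simp
    also have "\<dots> = Z A (tgt C q)" using assoc[OF f i' q] qi comp_zer_l[OF f E] by simp
    finally show ?thesis .
  qed
  have "is_cokernel C (q \<cdot> f') i"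
  proof (rule cokernelI[OF i comp_hom[OF f' q] qfi])
    fix X g assume a: "X \<in> Ob C" "g \<in> Hom C B X" "g \<cdot> i = Z A X"
    have z: "Z A' X \<in> Hom C A' X" by (rule zer_hom[OF obs(3) a(1)])
    have c: "g \<cdot> i = Z A' X \<cdot> f" using a(3) comp_zer_l[OF f a(1)] by simp
    obtain w where w: "w \<in> Hom C B' X" "w \<cdot> f' = g" "w \<cdot> i' = Z A' X"
      using ex1_implies_ex[OF pushoutD[OF po a(1) _ _ c]] a(2) z sq by auto
    obtain h where h: "h \<in> Hom C (tgt C q) X" "h \<cdot> q = w"
      using cok_fac[OF cq _ ] w sq by metis
    have "h \<cdot> (q \<cdot> f') = g" using assoc[OF f' q h(1)] h(2) w(2) by simp
    then show "\<exists>h\<in>Hom C (tgt C q) X. h \<cdot> (q \<cdot> f') = g" using h(1) by blast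
  next
    fix X h1 h2 assume a: "h1 \<in> Hom C (tgt C q) X" "h2 \<in> Hom C (tgt C q) X" "h1 \<cdot> (q \<cdot> f') = h2 \<cdot> (q \<cdot> f')"
    have X: "X \<in> Ob C" using a(1) hom_ob2 by blast
    have hq: "h1 \<cdot> q \<in> Hom C B' X" "h2 \<cdot> q \<in> Hom C B' X" using comp_hom q a by blast+
    have z1: "(h1 \<cdot> q) \<cdot> i' = Z A' X" using assoc[OF i' q a(1)] qi comp_zer_r[OF a(1) obs(3)] by simp
    have z2: "(h2 \<cdot> q) \<cdot> i' = Z A' X" using assoc[OF i' q a(2)] qi comp_zer_r[OF a(2) obs(3)] by simp
    let ?u = "(h1 \<cdot> q) \<cdot> f'"
    have u: "?u \<in> Hom C B X" by (rule comp_hom[OF f' hq(1)])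
    have c: "?u \<cdot> i = Z A' X \<cdot> f"
    proof -
      have "?u \<cdot> i = (h1 \<cdot> q) \<cdot> (i' \<cdot> f)" using assoc[OF i f' hq(1)] comm by simp
      also have "\<dots> = Z A' X \<cdot> f" using assoc[OF f i' hq(1)] z1 by simp
      finally show ?thesis .
    qed
    have e2: "(h2 \<cdot> q) \<cdot> f' = ?u" using assoc[OF f' q a(1)] assoc[OF f' q a(2)] a(3) by simp
    have "h1 \<cdot> q = h2 \<cdot> q"
      by (rule ex1_uniq[OF pushoutD[OF po X _ _ c]]) (use u zer_hom[OF obs(3) X] hq z1 z2 e2 sq in auto)
    then show "h1 = h2" using cok_epi[OF cq] a(1,2) by blast
  qed
  then show ?thesis by (rule W_newcok[OF ip0])
qed

theorem primal: assumes mi: "adm_monic C W i" and mi': "adm_monic C W i'"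
  shows "(is_pushout C i f f' i' \<longleftrightarrow> (mu, eps) \<in> W) \<and>
        (is_pushout C i f f' i' \<longleftrightarrow> is_pushout C i f f' i' \<and> is_pullback C f' i' i f) \<and>
        (is_pushout C i f f' i' \<longleftrightarrow>
          (\<exists>E p p'. p \<in> Hom C B E \<and> p' \<in> Hom C B' E \<and>
             (i, p) \<in> W \<and> (i', p') \<in> W \<and> p' \<cdot> f' = idm C E \<cdot> p))"
proof -
  have ii: "is_pushout C i f f' i' \<and> is_pullback C f' i' i f" if "(mu, eps) \<in> W"
    using cok_pushout[OF W_cok[OF that]] ker_pullback[OF W_ker[OF that]] by blast
  have iv_ii: "(mu, eps) \<in> W" if ex: "\<exists>E p p'. p \<in> Hom C B E \<and> p' \<in> Hom C B' E \<and>
             (i, p) \<in> W \<and> (i', p') \<in> W \<and> p' \<cdot> f' = idm C E \<cdot> p"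
  proof -
    obtain E p p' where a: "p \<in> Hom C B E" "p' \<in> Hom C B' E" "(i, p) \<in> W" "(i', p') \<in> W"
       "p' \<cdot> f' = idm C E \<cdot> p" using ex by blast
    have kk: "is_kernel C i' p'" by (rule W_ker[OF a(4)])
    have "p' \<cdot> i' = Z A' E" using ker_basic(3)[OF kk] i' a(2) hom_src hom_tgt by metis
    then show ?thesis using P3[OF a(3) a(2) _ _ kk] a(5) id_l[OF a(1)] by simp
  qed
  have po_iv': "\<exists>E p p'. p \<in> Hom C B E \<and> p' \<in> Hom C B' E \<and>
             (i, p) \<in> W \<and> (i', p') \<in> W \<and> p' \<cdot> f' = idm C E \<cdot> p" if po: "is_pushout C i f f' i'"
  proof -
    obtain q where iq: "(i', q) \<in> W" using mi' unfolding adm_monic_def by blast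
    have cq: "is_cokernel C q i'" by (rule W_cok[OF iq])
    have q: "q \<in> Hom C B' (tgt C q)" using cok_basic(2,4)[OF cq] hom_tgt[OF i'] by simp
    have "(i, q \<cdot> f') \<in> W" by (rule po_iv[OF po iq mi])
    moreover have "q \<cdot> f' = idm C (tgt C q) \<cdot> (q \<cdot> f')" using id_l[OF comp_hom[OF f' q]] by simp
    ultimately show ?thesis using iq q comp_hom[OF f' q] by blast
  qed
  show ?thesis using ii iv_ii po_iv' by blast
qed

end



definition opc :: "('o, 'm) addcat \<Rightarrow> ('o, 'm) addcat" where
  "opc C = \<lparr>Ob = Ob C, Mor = Mor C, src = tgt C, tgt = src C, cmp = (\<lambda>g f. cmp C f g),
     idm = idm C, madd = madd C, mneg = mneg C, zer = (\<lambda>A B. zer C B A), bsum = bsum C,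
     bin1 = bpr1 C, bin2 = bpr2 C, bpr1 = bin1 C, bpr2 = bin2 C\<rparr>"

lemma opc_simps[simp]: "Ob (opc C) = Ob C" "Mor (opc C) = Mor C" "src (opc C) = tgt C"
  "tgt (opc C) = src C" "cmp (opc C) g f = cmp C f g" "idm (opc C) = idm C" "madd (opc C) = madd C"
  "mneg (opc C) = mneg C" "zer (opc C) A B = zer C B A" "bsum (opc C) = bsum C"
  "bin1 (opc C) = bpr1 C" "bin2 (opc C) = bpr2 C" "bpr1 (opc C) = bin1 C" "bpr2 (opc C) = bin2 C"
  by (simp_all add: opc_def)

lemma Hom_op[simp]: "Hom (opc C) A B = Hom C B A" unfolding Hom_def by auto

lemma ker_op[simp]: "is_kernel (opc C) k d = is_cokernel C k d"
  unfolding is_kernel_def is_cokernel_def by (simp add: eq_commute[of "tgt C d" "src C k"] conj_ac)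

lemma cok_op[simp]: "is_cokernel (opc C) d k = is_kernel C d k"
  unfolding is_kernel_def is_cokernel_def by (simp add: eq_commute[of "tgt C d" "src C k"] conj_ac)

lemma kc_op[simp]: "kc_pair (opc C) k d = kc_pair C d k"
  unfolding kc_pair_def by auto

lemma po_op[simp]: "is_pushout (opc C) i t t' j = is_pullback C i t t' j"
  unfolding is_pushout_def is_pullback_def by simp

lemma pb_op[simp]: "is_pullback (opc C) h t q p = is_pushout C h t q p"
  unfolding is_pushout_def is_pullback_def by simp

lemma po_op_fun[simp]: "is_pushout (opc C) = is_pullback C" by (intro ext) simp
lemma pb_op_fun[simp]: "is_pullback (opc C) = is_pushout C" by (intro ext) simp

lemma iso_op[simp]: "iso (opc C) f = iso C f"
  unfolding iso_def by auto

lemma am_op[simp]: "adm_monic (opc C) {(d, i). (i, d) \<in> W} x = adm_epic C W x"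
  unfolding adm_monic_def adm_epic_def by simp
lemma ae_op[simp]: "adm_epic (opc C) {(d, i). (i, d) \<in> W} x = adm_monic C W x"
  unfolding adm_monic_def adm_epic_def by simp


lemma op_additive: assumes AC: "additive_category (C::('o,'m) addcat)" shows "additive_category (opc C)"
proof -
  interpret ac C by unfold_locales (rule AC)
  have z12: "\<exists>Z\<in>Ob C. \<forall>A\<in>Ob C. (\<exists>!f. f \<in> Hom C A Z) \<and> (\<exists>!f. f \<in> Hom C Z A)"
  proof -
    obtain Z where Z: "Z \<in> Ob C" "\<forall>A\<in>Ob C. (\<exists>!f. f \<in> Hom C Z A) \<and> (\<exists>!f. f \<in> Hom C A Z)"
      using ax12 by (elim bexE) 
    have "\<forall>A\<in>Ob C. (\<exists>!f. f \<in> Hom C A Z) \<and> (\<exists>!f. f \<in> Hom C Z A)"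
    proof
      fix A assume "A \<in> Ob C"
      then have "(\<exists>!f. f \<in> Hom C Z A) \<and> (\<exists>!f. f \<in> Hom C A Z)" using Z(2) by (rule bspec[rotated])
      then show "(\<exists>!f. f \<in> Hom C A Z) \<and> (\<exists>!f. f \<in> Hom C Z A)" by (rule conjE) (rule conjI)
    qed
    then show ?thesis using Z(1) by (rule bexI)
  qed
  show ?thesis
    unfolding additive_category_def opc_simps Hom_op
    apply (intro conjI)
    subgoal using mor_ob by blast
    subgoal using id_hom by blast
    subgoal using comp_hom by blast
    subgoal using assoc by (metis)
    subgoal using id_l id_r by blast
    subgoal using zer_hom by blast
    subgoal using add_hom add_comm by blast
    subgoal using add_assoc by blast
    subgoal using neg_hom add_0 add_neg by blast
    subgoal using distr by blast
    subgoal using distl by blast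
    subgoal by (rule z12)
    subgoal using bsum_ob bin1_hom bin2_hom bpr1_hom bpr2_hom p1i1 p2i2 p1i2 p2i1 bip_id by simp
    done
qed


context ac begin
lemma iso_inv: assumes "iso C x" "x \<in> Hom C X Y"
  obtains y where "y \<in> Hom C Y X" "y \<cdot> x = idm C X" "x \<cdot> y = idm C Y"
  using assms unfolding iso_def using hom_src[OF assms(2)] hom_tgt[OF assms(2)] by blast

lemma sq_swap: assumes x: "x \<in> Hom C P Q" and y: "y \<in> Hom C R S" and u: "u \<in> Hom C P R"
  and v: "v \<in> Hom C Q S" and u': "u' \<in> Hom C R P" and uu: "u \<cdot> u' = idm C R"
  and v': "v' \<in> Hom C S Q" and vv: "v' \<cdot> v = idm C Q" and c: "y \<cdot> u = v \<cdot> x"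
  shows "v' \<cdot> y = x \<cdot> u'"
proof -
  have "v' \<cdot> y = (v' \<cdot> y) \<cdot> (u \<cdot> u')" using uu id_r[OF comp_hom[OF y v']] by simp
  also have "\<dots> = v' \<cdot> (y \<cdot> u) \<cdot> u'" using assoc[OF u' u comp_hom[OF y v']] assoc[OF u y v'] by simp
  also have "\<dots> = (v' \<cdot> v) \<cdot> x \<cdot> u'" using c assoc[OF x v v'] by simp
  also have "\<dots> = x \<cdot> u'" using vv id_l[OF x] by simp
  finally show ?thesis .
qed

lemma msum_op: assumes "f \<in> Mor C" "g \<in> Mor C"
  shows "madd C (cmp C (cmp C (bin1 C (tgt C f) (tgt C g)) f) (bpr1 C (src C f) (src C g)))
                (cmp C (cmp C (bin2 C (tgt C f) (tgt C g)) g) (bpr2 C (src C f) (src C g))) = msum C f g"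
proof -
  have o: "src C f \<in> Ob C" "tgt C f \<in> Ob C" "src C g \<in> Ob C" "tgt C g \<in> Ob C" using mor_ob assms by blast+
  have f: "f \<in> Hom C (src C f) (tgt C f)" and g: "g \<in> Hom C (src C g) (tgt C g)" using mor_hom assms by blast+
  show ?thesis unfolding msum_def
    using assoc[OF bpr1_hom[OF o(1,3)] f bin1_hom[OF o(2,4)]] assoc[OF bpr2_hom[OF o(1,3)] g bin2_hom[OF o(2,4)]]
    by simp
qed
end

lemma msum_opc: assumes AC: "additive_category (C::('o,'m) addcat)" and "f \<in> Mor C" "g \<in> Mor C"
  shows "msum (opc C) f g = msum C f g"
proof -
  interpret ac C by unfold_locales (rule AC)
  show ?thesis using msum_op[OF assms(2,3)] unfolding msum_def by simp
qed

context we begin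
lemma iso_dual: assumes ke: "(k, e) \<in> W" and kc: "kc_pair C d' i'" and isos: "iso C a" "iso C b" "iso C c"
  and a: "a \<in> Hom C (tgt C i') (tgt C e)" and b: "b \<in> Hom C (src C i') (src C e)"
  and c: "c \<in> Hom C (src C d') (src C k)" and c1: "e \<cdot> b = a \<cdot> i'" and c2: "k \<cdot> c = b \<cdot> d'"
  shows "(d', i') \<in> W"
proof -
  have kk: "is_kernel C k e" using W_ker[OF ke] .
  have kk': "is_kernel C d' i'" using kc unfolding kc_pair_def by simp
  note kb = ker_basic[OF kk] and kb' = ker_basic[OF kk']
  obtain a1 where a1: "a1 \<in> Hom C (tgt C e) (tgt C i')" "a1 \<cdot> a = idm C (tgt C i')" "a \<cdot> a1 = idm C (tgt C e)"
    using iso_inv[OF isos(1) a] by blast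
  obtain b1 where b1: "b1 \<in> Hom C (src C e) (src C i')" "b1 \<cdot> b = idm C (src C i')" "b \<cdot> b1 = idm C (src C e)"
    using iso_inv[OF isos(2) b] by blast
  obtain c1' where c1': "c1' \<in> Hom C (src C k) (src C d')" "c1' \<cdot> c = idm C (src C d')" "c \<cdot> c1' = idm C (src C k)"
    using iso_inv[OF isos(3) c] by blast
  have t: "tgt C k = src C e" "tgt C d' = src C i'" using kb(1) kb'(1) hom_tgt by blast+
  show ?thesis
  proof (rule W_iso[OF ke kc isoI[OF c1'(1) c c1'(3,2)] isoI[OF b1(1) b b1(3,2)] isoI[OF a1(1) a a1(3,2)] c1'(1)])
    show "b1 \<in> Hom C (tgt C k) (tgt C d')" using b1(1) t by simp
    show "a1 \<in> Hom C (tgt C e) (tgt C i')" by (rule a1(1))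
    show "b1 \<cdot> k = d' \<cdot> c1'" by (rule sq_swap[OF kb'(1) kb(1) c b c1'(1) c1'(3) b1(1) b1(2) c2])
    show "a1 \<cdot> e = i' \<cdot> b1" by (rule sq_swap[OF kb'(2) kb(2) b a b1(1) b1(3) a1(1) a1(2) c1])
  qed
qed
end

lemma op_we: assumes AC: "additive_category (C::('o,'m) addcat)" and WE: "weakly_exact C W"
  shows "weakly_exact (opc C) {(d, i). (i, d) \<in> W}"
proof -
  interpret we C W by unfold_locales (rule AC, rule WE)
  have wx3: "\<forall>(i1, d1) \<in> W. \<forall>(i2, d2) \<in> W. (msum C i1 i2, msum C d1 d2) \<in> W"
    using WD by blast
  have wx4: "\<forall>A\<in>Ob C. adm_monic C W (idm C A)" using WD by blast
  have wx5: "\<forall>A\<in>Ob C. adm_epic C W (idm C A)" using WD by blast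
  have wx6: "\<forall>i t. adm_monic C W i \<and> t \<in> Mor C \<and> src C t = src C i \<longrightarrow>
        (\<exists>t' j. is_pushout C i t t' j) \<and>
        (\<forall>t' j. is_pushout C i t t' j \<longrightarrow> adm_monic C W j)" using WD by blast
  have sumW: "(msum (opc C) x1 x2, msum (opc C) y1 y2) \<in> W" if h: "(x1, y1) \<in> W" "(x2, y2) \<in> W" for x1 x2 y1 y2
  proof -
    have m: "x1 \<in> Mor C" "y1 \<in> Mor C" "x2 \<in> Mor C" "y2 \<in> Mor C"
      using W_ker[OF h(1)] W_ker[OF h(2)] unfolding is_kernel_def by simp_all
    have "(msum C x1 x2, msum C y1 y2) \<in> W" using wx3 h by blast
    then show ?thesis using msum_opc[OF AC m(1,3)] msum_opc[OF AC m(2,4)] by simp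
  qed
  show ?thesis
    unfolding weakly_exact_def
    apply (intro conjI)
    subgoal using W_kc by auto
    subgoal apply clarsimp by (rule iso_dual)
    subgoal apply clarsimp by (rule sumW)
    subgoal using wx5 by simp
    subgoal using wx4 by simp
    subgoal using wx7 by simp
    subgoal using wx6 by simp
    done
qed




theorem mainTheorem1:
  fixes C :: "('o, 'm) addcat" and W :: "('m \<times> 'm) set"
  assumes "additive_category C" and "weakly_exact C W"
  shows
   "(\<forall>A B A' B' i f f' i'.
       i \<in> Hom C A B \<and> f \<in> Hom C A A' \<and> f' \<in> Hom C B B' \<and> i' \<in> Hom C A' B' \<and>
       cmp C f' i = cmp C i' f \<and> adm_monic C W i \<and> adm_monic C W i' \<longrightarrow>
       ((is_pushout C i f f' i' \<longleftrightarrow>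
          (madd C (cmp C (bin1 C B A') i) (cmp C (bin2 C B A') (mneg C f)),
           madd C (cmp C f' (bpr1 C B A')) (cmp C i' (bpr2 C B A'))) \<in> W) \<and>
        (is_pushout C i f f' i' \<longleftrightarrow>
          is_pushout C i f f' i' \<and> is_pullback C f' i' i f) \<and>
        (is_pushout C i f f' i' \<longleftrightarrow>
          (\<exists>E p p'. p \<in> Hom C B E \<and> p' \<in> Hom C B' E \<and>
             (i, p) \<in> W \<and> (i', p') \<in> W \<and> cmp C p' f' = cmp C (idm C E) p)))) \<and>
    (\<forall>A B A' B' d g g' d'.
       d \<in> Hom C B A \<and> g \<in> Hom C A' A \<and> g' \<in> Hom C B' B \<and> d' \<in> Hom C B' A' \<and>
       cmp C d g' = cmp C g d' \<and> adm_epic C W d \<and> adm_epic C W d' \<longrightarrow>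
       ((is_pullback C d g g' d' \<longleftrightarrow>
          (madd C (cmp C (bin1 C B A') g') (cmp C (bin2 C B A') d'),
           madd C (cmp C d (bpr1 C B A')) (cmp C (mneg C g) (bpr2 C B A'))) \<in> W) \<and>
        (is_pullback C d g g' d' \<longleftrightarrow>
          is_pullback C d g g' d' \<and> is_pushout C g' d' d g) \<and>
        (is_pullback C d g g' d' \<longleftrightarrow>
          (\<exists>K k k'. k \<in> Hom C K B \<and> k' \<in> Hom C K B' \<and>
             (k, d) \<in> W \<and> (k', d') \<in> W \<and> cmp C g' k' = cmp C k (idm C K)))))"
proof -
  have P1: "(\<forall>A B A' B' i f f' i'.
       i \<in> Hom C A B \<and> f \<in> Hom C A A' \<and> f' \<in> Hom C B B' \<and> i' \<in> Hom C A' B' \<and>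
       cmp C f' i = cmp C i' f \<and> adm_monic C W i \<and> adm_monic C W i' \<longrightarrow>
       ((is_pushout C i f f' i' \<longleftrightarrow>
          (madd C (cmp C (bin1 C B A') i) (cmp C (bin2 C B A') (mneg C f)),
           madd C (cmp C f' (bpr1 C B A')) (cmp C i' (bpr2 C B A'))) \<in> W) \<and>
        (is_pushout C i f f' i' \<longleftrightarrow>
          is_pushout C i f f' i' \<and> is_pullback C f' i' i f) \<and>
        (is_pushout C i f f' i' \<longleftrightarrow>
          (\<exists>E p p'. p \<in> Hom C B E \<and> p' \<in> Hom C B' E \<and>
             (i, p) \<in> W \<and> (i', p') \<in> W \<and> cmp C p' f' = cmp C (idm C E) p))))"
  proof (intro allI impI)
    fix A B A' B' i f f' i'
    assume h: "i \<in> Hom C A B \<and> f \<in> Hom C A A' \<and> f' \<in> Hom C B B' \<and> i' \<in> Hom C A' B' \<and>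
       cmp C f' i = cmp C i' f \<and> adm_monic C W i \<and> adm_monic C W i'"
    interpret S: wsq C A B A' B' i f f' i' W
      by unfold_locales (use h assms in auto)
    have m: "adm_monic C W i" "adm_monic C W i'" using h by simp_all
    show "((is_pushout C i f f' i' \<longleftrightarrow>
          (madd C (cmp C (bin1 C B A') i) (cmp C (bin2 C B A') (mneg C f)),
           madd C (cmp C f' (bpr1 C B A')) (cmp C i' (bpr2 C B A'))) \<in> W) \<and>
        (is_pushout C i f f' i' \<longleftrightarrow>
          is_pushout C i f f' i' \<and> is_pullback C f' i' i f) \<and>
        (is_pushout C i f f' i' \<longleftrightarrow>
          (\<exists>E p p'. p \<in> Hom C B E \<and> p' \<in> Hom C B' E \<and>
             (i, p) \<in> W \<and> (i', p') \<in> W \<and> cmp C p' f' = cmp C (idm C E) p)))" by (rule S.primal[OF m])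
  qed
  have P2: "(\<forall>A B A' B' d g g' d'.
       d \<in> Hom C B A \<and> g \<in> Hom C A' A \<and> g' \<in> Hom C B' B \<and> d' \<in> Hom C B' A' \<and>
       cmp C d g' = cmp C g d' \<and> adm_epic C W d \<and> adm_epic C W d' \<longrightarrow>
       ((is_pullback C d g g' d' \<longleftrightarrow>
          (madd C (cmp C (bin1 C B A') g') (cmp C (bin2 C B A') d'),
           madd C (cmp C d (bpr1 C B A')) (cmp C (mneg C g) (bpr2 C B A'))) \<in> W) \<and>
        (is_pullback C d g g' d' \<longleftrightarrow>
          is_pullback C d g g' d' \<and> is_pushout C g' d' d g) \<and>
        (is_pullback C d g g' d' \<longleftrightarrow>
          (\<exists>K k k'. k \<in> Hom C K B \<and> k' \<in> Hom C K B' \<and>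
             (k, d) \<in> W \<and> (k', d') \<in> W \<and> cmp C g' k' = cmp C k (idm C K)))))"
  proof (intro allI impI)
    fix A B A' B' d g g' d'
    assume h: "d \<in> Hom C B A \<and> g \<in> Hom C A' A \<and> g' \<in> Hom C B' B \<and> d' \<in> Hom C B' A' \<and>
       cmp C d g' = cmp C g d' \<and> adm_epic C W d \<and> adm_epic C W d'"
    interpret O: wsq "opc C" A B A' B' d g g' d' "{(d, i). (i, d) \<in> W}"
      by unfold_locales (use h assms op_additive op_we in auto)
    have m: "adm_monic (opc C) {(d, i). (i, d) \<in> W} d" "adm_monic (opc C) {(d, i). (i, d) \<in> W} d'"
      using h by simp_all
    show "((is_pullback C d g g' d' \<longleftrightarrow>
          (madd C (cmp C (bin1 C B A') g') (cmp C (bin2 C B A') d'),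
           madd C (cmp C d (bpr1 C B A')) (cmp C (mneg C g) (bpr2 C B A'))) \<in> W) \<and>
        (is_pullback C d g g' d' \<longleftrightarrow>
          is_pullback C d g g' d' \<and> is_pushout C g' d' d g) \<and>
        (is_pullback C d g g' d' \<longleftrightarrow>
          (\<exists>K k k'. k \<in> Hom C K B \<and> k' \<in> Hom C K B' \<and>
             (k, d) \<in> W \<and> (k', d') \<in> W \<and> cmp C g' k' = cmp C k (idm C K))))" by (rule O.primal[OF m, unfolded opc_simps Hom_op po_op pb_op mem_Collect_eq case_prod_conv])
  qed
  show ?thesis using P1 P2 by (rule conjI)
qed



end
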